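(* Let $L\ge 2$ and let the loss $\ell$ satisfy Assumption 1. Let $W(t)=(W_L(t),\dots,W_1(t))$, $t\ge 0$, be a gradient flow trajectory whose initialization satisfies Assumption 2. Then: (i) $\lim_{t\to\infty}\mathcal{R}(W(t))=0$; (ii) for every $1\le k\le L$, $\lim_{t\to\infty}\|W_k(t)\|_F=\infty$; (iii) for every $1\le k\le L$, $\lim_{t\to\infty}\left\|\frac{W_k(t)}{\|W_k(t)\|_F}-u_k(t)v_k(t)^\top\right\|_F=0$; for every $1\le k<L$, $\lim_{t\to\infty}|\langle v_{k+1}(t),u_k(t)\rangle|=1$; consequently $$\lim_{t\to\infty}\left|\left\langle \frac{w_{\mathrm{prod}}(t)}{\prod_{k=1}^L\|W_k(t)\|_F},\,v_1(t)\right\rangle\right|=1,$$ and $\lim_{t\to\infty}\|w_{\mathrm{prod}}(t)\|=\infty$.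
   Context: Setting: data $(x_i,y_i)_{i=1}^n$ with $x_i\in\mathbb{R}^d$, $\|x_i\|\le 1$, $y_i\in\{-1,+1\}$; put $z_i:=y_ix_i$. The data are linearly separable, i.e. some unit vector $u$ has $\langle u,z_i\rangle>0$ for all $i$. Let $\gamma:=\max_{\|u\|=1}\min_{i}\langle u,z_i\rangle>0$ and let $\bar u$ be the unique unit vector attaining it. A depth-$L$ linear network is $W=(W_L,\dots,W_1)$ with $W_k\in\mathbb{R}^{d_k\times d_{k-1}}$, $d_0=d$, $d_L=1$, and $w_{\mathrm{prod}}:=(W_L\cdots W_1)^\top\in\mathbb{R}^d$. The risk is $\mathcal{R}(W)=\frac1n\sum_{i=1}^n\ell(\langle w_{\mathrm{prod}},z_i\rangle)$, a function of all entries of $W$; $\|\cdot\|$ on $W$ is the Euclidean norm over all entries, $\|\cdot\|_F$ the Frobenius norm, $\|\cdot\|_2$ the spectral norm. Assumption 1: $\ell:\mathbb{R}\to\mathbb{R}$ is continuously differentiable, $\ell'(x)<0$ for all $x$, $\lim_{x\to-\infty}\ell(x)=\infty$ and $\lim_{x\to\infty}\ell(x)=0$. Gradient flow: a $C^1$ curve $W(t)$, $t\in[0,\infty)$, with $\frac{d}{dt}W(t)=-\nabla\mathcal{R}(W(t))$. Assumption 2: $\nabla\mathcal{R}(W(0))\neq 0$ and $\mathcal{R}(W(0))\le \ell(0)$. For each $k$ and time $t$, $\sigma_k(t)=\|W_k(t)\|_2$ and $u_k(t),v_k(t)$ are a pair of first (top) left and right unit singular vectors of $W_k(t)$. *)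

theory Defs
  imports "HOL-Analysis.Analysis"
begin

text \<open>A depth-L linear network is represented by
  W :: nat => nat => nat => real, where W k i j is entry (i,j) of the layer
  matrix W_k (1 <= k <= L, i < dims k, j < dims (k-1)).  Vectors in R^m are
  functions nat => real read on the indices {..<m}.  Data are given by
  x :: nat => nat => real (x i j = j-th coordinate of x_i, i < n, j < dims 0)
  and labels y :: nat => real.\<close>

type_synonym net = "nat \<Rightarrow> nat \<Rightarrow> nat \<Rightarrow> real"

fun prodmat :: "(nat \<Rightarrow> nat) \<Rightarrow> net \<Rightarrow> nat \<Rightarrow> nat \<Rightarrow> nat \<Rightarrow> real" where
  "prodmat dims W 0 i j = (if i = j then 1 else 0)"
| "prodmat dims W (Suc k) i j = (\<Sum>m<dims k. W (Suc k) i m * prodmat dims W k m j)"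

text \<open>w_prod = (W_L ... W_1)^T in R^{dims 0}.\<close>
definition wprod :: "(nat \<Rightarrow> nat) \<Rightarrow> nat \<Rightarrow> net \<Rightarrow> nat \<Rightarrow> real" where
  "wprod dims L W j = prodmat dims W L 0 j"

definition zvec :: "(nat \<Rightarrow> nat \<Rightarrow> real) \<Rightarrow> (nat \<Rightarrow> real) \<Rightarrow> nat \<Rightarrow> nat \<Rightarrow> real" where
  "zvec x y i j = y i * x i j"

definition risk :: "(real \<Rightarrow> real) \<Rightarrow> nat \<Rightarrow> (nat \<Rightarrow> nat \<Rightarrow> real) \<Rightarrow> (nat \<Rightarrow> real)
    \<Rightarrow> (nat \<Rightarrow> nat) \<Rightarrow> nat \<Rightarrow> net \<Rightarrow> real" where
  "risk loss n x y dims L W =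
     (1 / real n) * (\<Sum>i<n. loss (\<Sum>j<dims 0. wprod dims L W j * zvec x y i j))"

definition upd_entry :: "net \<Rightarrow> nat \<Rightarrow> nat \<Rightarrow> nat \<Rightarrow> real \<Rightarrow> net" where
  "upd_entry W k i j c = W(k := (W k)(i := (W k i)(j := c)))"

definition grad_entry :: "(net \<Rightarrow> real) \<Rightarrow> net \<Rightarrow> nat \<Rightarrow> nat \<Rightarrow> nat \<Rightarrow> real" where
  "grad_entry F W k i j = deriv (\<lambda>s. F (upd_entry W k i j (W k i j + s))) 0"

definition frob :: "(nat \<Rightarrow> nat) \<Rightarrow> net \<Rightarrow> nat \<Rightarrow> real" where
  "frob dims W k = sqrt (\<Sum>i<dims k. \<Sum>j<dims (k - 1). (W k i j)\<^sup>2)"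

definition vnorm :: "nat \<Rightarrow> (nat \<Rightarrow> real) \<Rightarrow> real" where
  "vnorm m v = sqrt (\<Sum>i<m. (v i)\<^sup>2)"

definition vinner :: "nat \<Rightarrow> (nat \<Rightarrow> real) \<Rightarrow> (nat \<Rightarrow> real) \<Rightarrow> real" where
  "vinner m u v = (\<Sum>i<m. u i * v i)"

definition layer_mv :: "(nat \<Rightarrow> nat) \<Rightarrow> net \<Rightarrow> nat \<Rightarrow> (nat \<Rightarrow> real) \<Rightarrow> nat \<Rightarrow> real" where
  "layer_mv dims W k v i = (\<Sum>j<dims (k - 1). W k i j * v j)"

definition layer_tmv :: "(nat \<Rightarrow> nat) \<Rightarrow> net \<Rightarrow> nat \<Rightarrow> (nat \<Rightarrow> real) \<Rightarrow> nat \<Rightarrow> real" where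
  "layer_tmv dims W k u j = (\<Sum>i<dims k. W k i j * u i)"

definition specnorm :: "(nat \<Rightarrow> nat) \<Rightarrow> net \<Rightarrow> nat \<Rightarrow> real" where
  "specnorm dims W k =
     Sup {vnorm (dims k) (layer_mv dims W k v) | v. vnorm (dims (k - 1)) v \<le> 1}"

definition top_sing_pair :: "(nat \<Rightarrow> nat) \<Rightarrow> net \<Rightarrow> nat \<Rightarrow> (nat \<Rightarrow> real) \<Rightarrow> (nat \<Rightarrow> real) \<Rightarrow> bool" where
  "top_sing_pair dims W k u v \<longleftrightarrow>
     vnorm (dims k) u = 1 \<and> vnorm (dims (k - 1)) v = 1 \<and>
     (\<forall>i<dims k. layer_mv dims W k v i = specnorm dims W k * u i) \<and>
     (\<forall>j<dims (k - 1). layer_tmv dims W k u j = specnorm dims W k * v j)"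

definition align_err :: "(nat \<Rightarrow> nat) \<Rightarrow> net \<Rightarrow> nat \<Rightarrow> (nat \<Rightarrow> real) \<Rightarrow> (nat \<Rightarrow> real) \<Rightarrow> real" where
  "align_err dims W k u v =
     sqrt (\<Sum>i<dims k. \<Sum>j<dims (k - 1). (W k i j / frob dims W k - u i * v j)\<^sup>2)"

end

theory Submission
  imports Defs
begin


fun Q :: "(nat \<Rightarrow> nat) \<Rightarrow> net \<Rightarrow> nat \<Rightarrow> nat \<Rightarrow> nat \<Rightarrow> nat \<Rightarrow> real" where
  "Q dims W k 0 i a = (if i = a then 1 else 0)"
| "Q dims W k (Suc d) i a = (\<Sum>c<dims (k+d). W (Suc (k+d)) i c * Q dims W k d c a)"

lemma prodmat_Q: "prodmat dims W d i j = Q dims W 0 d i j"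
  by (induction d arbitrary: i j) auto

lemma prodmat_cong: "(\<And>l. 1 \<le> l \<Longrightarrow> l \<le> d \<Longrightarrow> W' l = W l) \<Longrightarrow> prodmat dims W' d i j = prodmat dims W d i j"
  by (induction d arbitrary: i j) auto

lemma Q_cong: "(\<And>l. k < l \<Longrightarrow> l \<le> k + d \<Longrightarrow> W' l = W l) \<Longrightarrow> Q dims W' k d i j = Q dims W k d i j"
  by (induction d arbitrary: i j) auto

lemma sum_delta_left: assumes "a < (N::nat)" shows "(\<Sum>c<N. (if c = a then 1 else 0) * f c) = (f a :: real)"
proof -
  have "(\<Sum>c<N. (if c = a then 1 else 0) * f c) = (\<Sum>c<N. if c = a then f c else 0)"
    by (rule sum.cong) auto
  then show ?thesis using assms by simp
qed

lemma swap3: "(\<Sum>c\<in>C. f c * (\<Sum>m\<in>M. \<Sum>a\<in>A m. \<Sum>b\<in>B m. g c m a b)) =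
   (\<Sum>m\<in>M. \<Sum>a\<in>A m. \<Sum>b\<in>B m. \<Sum>c\<in>C. f c * (g c m a b :: real))"
proof -
  have "(\<Sum>c\<in>C. f c * (\<Sum>m\<in>M. \<Sum>a\<in>A m. \<Sum>b\<in>B m. g c m a b)) =
     (\<Sum>c\<in>C. \<Sum>m\<in>M. \<Sum>a\<in>A m. \<Sum>b\<in>B m. f c * g c m a b)"
    by (simp add: sum_distrib_left)
  also have "\<dots> = (\<Sum>m\<in>M. \<Sum>c\<in>C. \<Sum>a\<in>A m. \<Sum>b\<in>B m. f c * g c m a b)"
    by (rule sum.swap)
  also have "\<dots> = (\<Sum>m\<in>M. \<Sum>a\<in>A m. \<Sum>c\<in>C. \<Sum>b\<in>B m. f c * g c m a b)"
    by (rule sum.cong[OF refl], rule sum.swap)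
  also have "\<dots> = (\<Sum>m\<in>M. \<Sum>a\<in>A m. \<Sum>b\<in>B m. \<Sum>c\<in>C. f c * g c m a b)"
    by (rule sum.cong[OF refl], rule sum.cong[OF refl], rule sum.swap)
  finally show ?thesis .
qed

lemma Q_split:
  "i < dims (k + d1 + d2) \<Longrightarrow> Q dims W k (d1 + d2) i a = (\<Sum>c<dims (k + d1). Q dims W (k + d1) d2 i c * Q dims W k d1 c a)"
proof (induction d2 arbitrary: i)
  case 0
  have "(\<Sum>c<dims (k + d1). Q dims W (k + d1) 0 i c * Q dims W k d1 c a) = (\<Sum>c<dims (k + d1). (if c = i then 1 else 0) * Q dims W k d1 c a)"
    by (intro sum.cong refl) auto
  also have "\<dots> = Q dims W k d1 i a" using 0 by (intro sum_delta_left) simp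
  finally show ?case by simp
next
  case (Suc d2)
  have "Q dims W k (d1 + Suc d2) i a = (\<Sum>e<dims (k + (d1 + d2)). W (Suc (k + (d1 + d2))) i e * Q dims W k (d1 + d2) e a)"
    by simp
  also have "\<dots> = (\<Sum>e<dims (k + d1 + d2). W (Suc (k + d1 + d2)) i e * (\<Sum>c<dims (k + d1). Q dims W (k + d1) d2 e c * Q dims W k d1 c a))"
    by (intro sum.cong refl) (simp_all add: Suc.IH add.assoc)
  also have "\<dots> = (\<Sum>c<dims (k + d1). (\<Sum>e<dims (k + d1 + d2). W (Suc (k + d1 + d2)) i e * Q dims W (k + d1) d2 e c) * Q dims W k d1 c a)"
    by (simp add: sum_distrib_left sum_distrib_right mult.assoc sum.swap[of _ "{..<dims (k + d1)}"])
  also have "\<dots> = (\<Sum>c<dims (k + d1). Q dims W (k + d1) (Suc d2) i c * Q dims W k d1 c a)"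
    by simp
  finally show ?case .
qed

lemma prodmat_upd:
  assumes "a < dims (Suc m0)" "b < dims m0"
  shows "prodmat dims (upd_entry W (Suc m0) a b (W (Suc m0) a b + s)) d i j =
    prodmat dims W d i j + (if Suc m0 \<le> d then s * Q dims W (Suc m0) (d - Suc m0) i a * prodmat dims W m0 b j else 0)"
proof (induction d arbitrary: i j)
  case 0 then show ?case by simp
next
  case (Suc d)
  let ?W' = "upd_entry W (Suc m0) a b (W (Suc m0) a b + s)"
  show ?case
  proof (cases "Suc d < Suc m0")
    case True
    then have "prodmat dims ?W' (Suc d) i j = prodmat dims W (Suc d) i j"
      by (intro prodmat_cong) (auto simp: upd_entry_def)
    then show ?thesis using True by simp
  next
    case False
    show ?thesis
    proof (cases "d = m0")
      case True
      have pc: "prodmat dims ?W' m0 c j = prodmat dims W m0 c j" for c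
        by (rule prodmat_cong) (auto simp: upd_entry_def)
      have "prodmat dims ?W' (Suc d) i j = (\<Sum>c<dims m0. ?W' (Suc m0) i c * prodmat dims W m0 c j)"
        using True by (simp only: prodmat.simps pc)
      also have "\<dots> = (\<Sum>c<dims m0. W (Suc m0) i c * prodmat dims W m0 c j)
          + (\<Sum>c<dims m0. (if i = a \<and> c = b then s else 0) * prodmat dims W m0 c j)"
        by (auto simp: upd_entry_def sum.distrib[symmetric] algebra_simps intro!: sum.cong)
      also have "(\<Sum>c<dims m0. (if i = a \<and> c = b then s else 0) * prodmat dims W m0 c j)
           = (\<Sum>c<dims m0. if c = b then (if i = a then s * prodmat dims W m0 b j else 0) else 0)"
        by (rule sum.cong) auto
      also have "\<dots> = (if i = a then s * prodmat dims W m0 b j else 0)"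
        using assms by simp
      finally show ?thesis using True by simp
    next
      case False
      then have d: "Suc m0 \<le> d" using \<open>\<not> Suc d < Suc m0\<close> by simp
      have "prodmat dims ?W' (Suc d) i j = (\<Sum>c<dims d. W (Suc d) i c * prodmat dims ?W' d c j)"
        using d by (simp add: upd_entry_def)
      also have "\<dots> = prodmat dims W (Suc d) i j + s * (\<Sum>c<dims d. W (Suc d) i c * Q dims W (Suc m0) (d - Suc m0) c a) * prodmat dims W m0 b j"
        using d unfolding Suc.IH by (simp add: algebra_simps sum.distrib sum_distrib_left sum_distrib_right)
      also have "(\<Sum>c<dims d. W (Suc d) i c * Q dims W (Suc m0) (d - Suc m0) c a) = Q dims W (Suc m0) (Suc d - Suc m0) i a"
      proof -
        have e: "Suc d - Suc m0 = Suc (d - Suc m0)" "Suc m0 + (d - Suc m0) = d" using d by auto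
        show ?thesis unfolding e(1) Q.simps e(2) by simp
      qed
      finally show ?thesis using d by simp
    qed
  qed
qed

locale setting =
  fixes n L :: nat and dims :: "nat \<Rightarrow> nat"
    and x :: "nat \<Rightarrow> nat \<Rightarrow> real" and y :: "nat \<Rightarrow> real"
    and loss :: "real \<Rightarrow> real"
  assumes loss_diff: "\<forall>s. loss differentiable (at s)"
begin

abbreviation "RR \<equiv> risk loss n x y dims L"
abbreviation "P \<equiv> prodmat dims"
definition cc :: "net \<Rightarrow> nat \<Rightarrow> real" where
  "cc W i = (\<Sum>j<dims 0. P W L 0 j * zvec x y i j)"
definition gv :: "net \<Rightarrow> nat \<Rightarrow> real" where
  "gv W j = (1 / real n) * (\<Sum>i<n. deriv loss (cc W i) * zvec x y i j)"
definition Tv :: "net \<Rightarrow> nat \<Rightarrow> nat \<Rightarrow> real" where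
  "Tv W k a = Q dims W k (L - k) 0 a"
definition Bv :: "net \<Rightarrow> nat \<Rightarrow> nat \<Rightarrow> real" where
  "Bv W m b = (\<Sum>j<dims 0. P W m b j * gv W j)"

lemma RR_cc: "RR W = (1 / real n) * (\<Sum>i<n. loss (cc W i))"
  by (simp add: risk_def cc_def wprod_def)

lemma loss_deriv: "(loss has_real_derivative deriv loss s) (at s)"
  using loss_diff DERIV_deriv_iff_real_differentiable by blast

lemma grad_formula:
  assumes "Suc m \<le> L" "a < dims (Suc m)" "b < dims m"
  shows "grad_entry RR W (Suc m) a b = Tv W (Suc m) a * Bv W m b"
proof -
  define e where "e i = (\<Sum>j<dims 0. Tv W (Suc m) a * P W m b j * zvec x y i j)" for i
  have eq: "RR (upd_entry W (Suc m) a b (W (Suc m) a b + s)) = (1 / real n) * (\<Sum>i<n. loss (cc W i + s * e i))" for s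
    unfolding RR_cc cc_def e_def prodmat_upd[OF assms(2,3)] using assms(1)
    by (simp add: Tv_def algebra_simps sum.distrib sum_distrib_left)
  have D: "((\<lambda>s. (1 / real n) * (\<Sum>i<n. loss (cc W i + s * e i))) has_real_derivative
      (1 / real n) * (\<Sum>i<n. deriv loss (cc W i) * e i)) (at 0)"
  proof -
    have "((\<lambda>s. loss (cc W i + s * e i)) has_real_derivative deriv loss (cc W i) * e i) (at 0)" for i
    proof -
      have "((\<lambda>s. cc W i + s * e i) has_real_derivative e i) (at 0)"
        by (auto intro!: derivative_eq_intros)
      from DERIV_chain2[OF _ this, of loss "deriv loss (cc W i)"] loss_deriv show ?thesis by simp
    qed
    then have "((\<lambda>s. \<Sum>i<n. loss (cc W i + s * e i)) has_real_derivative (\<Sum>i<n. deriv loss (cc W i) * e i)) (at 0)"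
      by (intro DERIV_sum) auto
    then show ?thesis by (rule DERIV_cmult)
  qed
  have "grad_entry RR W (Suc m) a b = (1 / real n) * (\<Sum>i<n. deriv loss (cc W i) * e i)"
    unfolding grad_entry_def eq using DERIV_imp_deriv[OF D] by simp
  also have "\<dots> = Tv W (Suc m) a * Bv W m b"
    unfolding e_def Bv_def gv_def
    by (simp add: sum_distrib_left sum_distrib_right algebra_simps sum.swap[of _ "{..<n}"])
  finally show ?thesis .
qed

lemma P_deriv:
  fixes Wt :: "real \<Rightarrow> net" and Wd :: "nat \<Rightarrow> nat \<Rightarrow> nat \<Rightarrow> real"
  assumes WD: "\<And>k i j. k \<in> {1..L} \<Longrightarrow> i < dims k \<Longrightarrow> j < dims (k - 1) \<Longrightarrow>
      ((\<lambda>s. Wt s k i j) has_real_derivative Wd k i j) (at t within S)"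
  shows "d \<le> L \<Longrightarrow> i < dims d \<Longrightarrow> ((\<lambda>s. P (Wt s) d i j) has_real_derivative
     (\<Sum>m<d. \<Sum>a<dims (Suc m). \<Sum>b<dims m. Q dims (Wt t) (Suc m) (d - Suc m) i a * Wd (Suc m) a b * P (Wt t) m b j))
     (at t within S)"
proof (induction d arbitrary: i)
  case 0 then show ?case by simp
next
  case (Suc d)
  have h1: "((\<lambda>s. Wt s (Suc d) i c) has_real_derivative Wd (Suc d) i c) (at t within S)" if "c < dims d" for c
    using WD[of "Suc d" i c] Suc.prems that by auto
  have h2: "((\<lambda>s. P (Wt s) d c j) has_real_derivative
     (\<Sum>m<d. \<Sum>a<dims (Suc m). \<Sum>b<dims m. Q dims (Wt t) (Suc m) (d - Suc m) c a * Wd (Suc m) a b * P (Wt t) m b j))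
     (at t within S)" if "c < dims d" for c
    using Suc.IH[of c] Suc.prems that by auto
  have "((\<lambda>s. P (Wt s) (Suc d) i j) has_real_derivative
      (\<Sum>c<dims d. Wd (Suc d) i c * P (Wt t) d c j + Wt t (Suc d) i c *
        (\<Sum>m<d. \<Sum>a<dims (Suc m). \<Sum>b<dims m. Q dims (Wt t) (Suc m) (d - Suc m) c a * Wd (Suc m) a b * P (Wt t) m b j)))
     (at t within S)"
    unfolding prodmat.simps
  proof (intro DERIV_sum)
    fix c assume "c \<in> {..<dims d}"
    then show "((\<lambda>s. Wt s (Suc d) i c * P (Wt s) d c j) has_real_derivative
      Wd (Suc d) i c * P (Wt t) d c j + Wt t (Suc d) i c *
        (\<Sum>m<d. \<Sum>a<dims (Suc m). \<Sum>b<dims m. Q dims (Wt t) (Suc m) (d - Suc m) c a * Wd (Suc m) a b * P (Wt t) m b j))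
     (at t within S)"
    proof -
      have c: "c < dims d" using \<open>c \<in> {..<dims d}\<close> by simp
      from DERIV_mult[OF h1[OF c] h2[OF c]] show ?thesis
        by (simp only: mult.commute[of _ "Wt t (Suc d) i c"])
    qed
  qed
  also have "(\<Sum>c<dims d. Wd (Suc d) i c * P (Wt t) d c j + Wt t (Suc d) i c *
        (\<Sum>m<d. \<Sum>a<dims (Suc m). \<Sum>b<dims m. Q dims (Wt t) (Suc m) (d - Suc m) c a * Wd (Suc m) a b * P (Wt t) m b j))
     = (\<Sum>m<Suc d. \<Sum>a<dims (Suc m). \<Sum>b<dims m. Q dims (Wt t) (Suc m) (Suc d - Suc m) i a * Wd (Suc m) a b * P (Wt t) m b j)"
  proof -
    have A: "(\<Sum>a<dims (Suc d). \<Sum>b<dims d. Q dims (Wt t) (Suc d) (Suc d - Suc d) i a * Wd (Suc d) a b * P (Wt t) d b j)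
        = (\<Sum>c<dims d. Wd (Suc d) i c * P (Wt t) d c j)"
    proof -
      have "(\<Sum>a<dims (Suc d). \<Sum>b<dims d. Q dims (Wt t) (Suc d) (Suc d - Suc d) i a * Wd (Suc d) a b * P (Wt t) d b j)
        = (\<Sum>a<dims (Suc d). (if a = i then 1 else 0) * (\<Sum>b<dims d. Wd (Suc d) a b * P (Wt t) d b j))"
      proof (intro sum.cong refl)
        fix a show "(\<Sum>b<dims d. Q dims (Wt t) (Suc d) (Suc d - Suc d) i a * Wd (Suc d) a b * P (Wt t) d b j) =
          (if a = i then 1 else 0) * (\<Sum>b<dims d. Wd (Suc d) a b * P (Wt t) d b j)"
          by (cases "a = i") auto
      qed
      also have "\<dots> = (\<Sum>b<dims d. Wd (Suc d) i b * P (Wt t) d b j)"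
        by (rule sum_delta_left) (use Suc.prems in simp)
      finally show ?thesis .
    qed
    have B: "(\<Sum>c<dims d. Wt t (Suc d) i c *
        (\<Sum>m<d. \<Sum>a<dims (Suc m). \<Sum>b<dims m. Q dims (Wt t) (Suc m) (d - Suc m) c a * Wd (Suc m) a b * P (Wt t) m b j))
      = (\<Sum>m<d. \<Sum>a<dims (Suc m). \<Sum>b<dims m. Q dims (Wt t) (Suc m) (Suc d - Suc m) i a * Wd (Suc m) a b * P (Wt t) m b j)"
    proof -
      have "(\<Sum>c<dims d. Wt t (Suc d) i c *
        (\<Sum>m<d. \<Sum>a<dims (Suc m). \<Sum>b<dims m. Q dims (Wt t) (Suc m) (d - Suc m) c a * Wd (Suc m) a b * P (Wt t) m b j))
        = (\<Sum>m<d. \<Sum>a<dims (Suc m). \<Sum>b<dims m. (\<Sum>c<dims d. Wt t (Suc d) i c * Q dims (Wt t) (Suc m) (d - Suc m) c a) * Wd (Suc m) a b * P (Wt t) m b j)"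
        unfolding swap3 by (intro sum.cong refl) (simp add: sum_distrib_right mult.assoc)
      also have "\<dots> = (\<Sum>m<d. \<Sum>a<dims (Suc m). \<Sum>b<dims m. Q dims (Wt t) (Suc m) (Suc d - Suc m) i a * Wd (Suc m) a b * P (Wt t) m b j)"
      proof (intro sum.cong refl)
        fix m a b assume "m \<in> {..<d}"
        then have e: "Suc d - Suc m = Suc (d - Suc m)" "Suc m + (d - Suc m) = d" by auto
        show "(\<Sum>c<dims d. Wt t (Suc d) i c * Q dims (Wt t) (Suc m) (d - Suc m) c a) * Wd (Suc m) a b * P (Wt t) m b j
          = Q dims (Wt t) (Suc m) (Suc d - Suc m) i a * Wd (Suc m) a b * P (Wt t) m b j"
          unfolding e(1) Q.simps e(2) by simp
      qed
      finally show ?thesis .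
    qed
    show ?thesis unfolding sum.distrib A[symmetric] B[symmetric] sum.lessThan_Suc[of _ d] by (rule add.commute)
  qed
  finally show ?case .
qed


lemma RR_deriv:
  fixes Wt :: "real \<Rightarrow> net" and Wd :: "nat \<Rightarrow> nat \<Rightarrow> nat \<Rightarrow> real"
  assumes WD: "\<And>k i j. k \<in> {1..L} \<Longrightarrow> i < dims k \<Longrightarrow> j < dims (k - 1) \<Longrightarrow>
      ((\<lambda>s. Wt s k i j) has_real_derivative Wd k i j) (at t within S)"
    and dL: "0 < dims L"
  shows "((\<lambda>s. RR (Wt s)) has_real_derivative
     (\<Sum>m<L. \<Sum>a<dims (Suc m). \<Sum>b<dims m. Tv (Wt t) (Suc m) a * Bv (Wt t) m b * Wd (Suc m) a b))
     (at t within S)"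
proof -
  define dP where "dP j = (\<Sum>m<L. \<Sum>a<dims (Suc m). \<Sum>b<dims m. Q dims (Wt t) (Suc m) (L - Suc m) 0 a * Wd (Suc m) a b * P (Wt t) m b j)" for j
  have hP: "((\<lambda>s. P (Wt s) L 0 j) has_real_derivative dP j) (at t within S)" for j
    unfolding dP_def by (rule P_deriv[OF WD]) (use dL in auto)
  have hc: "((\<lambda>s. cc (Wt s) i) has_real_derivative (\<Sum>j<dims 0. dP j * zvec x y i j)) (at t within S)" for i
    unfolding cc_def by (intro DERIV_sum DERIV_cmult_right hP)
  have hl: "((\<lambda>s. loss (cc (Wt s) i)) has_real_derivative deriv loss (cc (Wt t) i) * (\<Sum>j<dims 0. dP j * zvec x y i j)) (at t within S)" for i
    by (rule DERIV_chain2[OF loss_deriv hc])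
  have "((\<lambda>s. RR (Wt s)) has_real_derivative (1 / real n) * (\<Sum>i<n. deriv loss (cc (Wt t) i) * (\<Sum>j<dims 0. dP j * zvec x y i j))) (at t within S)"
    unfolding RR_cc by (intro DERIV_cmult DERIV_sum hl)
  also have "(1 / real n) * (\<Sum>i<n. deriv loss (cc (Wt t) i) * (\<Sum>j<dims 0. dP j * zvec x y i j)) = (\<Sum>j<dims 0. dP j * gv (Wt t) j)"
    unfolding gv_def by (simp add: sum_distrib_left sum_distrib_right algebra_simps sum.swap[of _ "{..<n}"])
  also have "\<dots> = (\<Sum>j<dims 0. gv (Wt t) j * dP j)" by (simp add: mult.commute)
  also have "\<dots> = (\<Sum>m<L. \<Sum>a<dims (Suc m). \<Sum>b<dims m. Tv (Wt t) (Suc m) a * Bv (Wt t) m b * Wd (Suc m) a b)"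
    unfolding dP_def swap3 Bv_def Tv_def
    by (intro sum.cong refl) (simp add: sum_distrib_left sum_distrib_right algebra_simps)
  finally show ?thesis .
qed

end



lemma antimono_deriv:
  fixes f f' :: "real \<Rightarrow> real"
  assumes D: "\<And>t. a \<le> t \<Longrightarrow> (f has_real_derivative f' t) (at t within {a..})"
    and N: "\<And>t. a < t \<Longrightarrow> f' t \<le> 0"
    and st: "a \<le> s" "s \<le> t"
  shows "f t \<le> f s"
proof (cases "s = t")
  case True then show ?thesis by simp
next
  case False
  then have "s < t" using st by simp
  have "\<And>x. s \<le> x \<Longrightarrow> x \<le> t \<Longrightarrow> (f has_derivative (\<lambda>h. f' x * h)) (at x within {s..t})"
  proof -
    fix x assume "s \<le> x" "x \<le> t"
    then have "(f has_real_derivative f' x) (at x within {s..t})"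
      using DERIV_subset[OF D[of x]] st by auto
    then show "(f has_derivative (\<lambda>h. f' x * h)) (at x within {s..t})"
      by (simp add: has_field_derivative_def)
  qed
  from mvt_simple[OF \<open>s < t\<close> this] obtain z where z: "z \<in> {s<..<t}" "f t - f s = f' z * (t - s)"
    by auto
  have "f' z \<le> 0" using N z(1) st by auto
  then have "f' z * (t - s) \<le> 0" using \<open>s < t\<close> by (simp add: mult_nonpos_nonneg)
  then show ?thesis using z by simp
qed

lemma sqrt_prod: "sqrt (prod f A) = (\<Prod>k\<in>A. sqrt (f k))"
  by (induction A rule: infinite_finite_induct) (auto simp: real_sqrt_mult)

lemma CS1: "(\<Sum>i\<in>A. a i * b i) \<le> sqrt (\<Sum>i\<in>A. (a i)\<^sup>2) * sqrt (\<Sum>i\<in>A. (b i :: real)\<^sup>2)"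
proof -
  have "(\<Sum>i\<in>A. a i * b i)\<^sup>2 \<le> (\<Sum>i\<in>A. (a i)\<^sup>2) * (\<Sum>i\<in>A. (b i)\<^sup>2)"
    by (rule Cauchy_Schwarz_ineq_sum)
  then have "\<bar>\<Sum>i\<in>A. a i * b i\<bar> \<le> sqrt ((\<Sum>i\<in>A. (a i)\<^sup>2) * (\<Sum>i\<in>A. (b i)\<^sup>2))"
    using real_le_rsqrt real_sqrt_abs by (metis real_sqrt_le_iff)
  then show ?thesis by (simp add: real_sqrt_mult)
qed

lemma CS2: "(\<Sum>i\<in>A. \<Sum>j\<in>B. a i j * b i j) \<le> sqrt (\<Sum>i\<in>A. \<Sum>j\<in>B. (a i j)\<^sup>2) * sqrt (\<Sum>i\<in>A. \<Sum>j\<in>B. (b i j :: real)\<^sup>2)"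
proof -
  have "(\<Sum>p\<in>A \<times> B. a (fst p) (snd p) * b (fst p) (snd p)) \<le> sqrt (\<Sum>p\<in>A \<times> B. (a (fst p) (snd p))\<^sup>2) * sqrt (\<Sum>p\<in>A \<times> B. (b (fst p) (snd p))\<^sup>2)"
    by (rule CS1)
  then show ?thesis by (simp add: sum.cartesian_product split_def)
qed

context setting begin

definition gradf :: "net \<Rightarrow> nat \<Rightarrow> nat \<Rightarrow> nat \<Rightarrow> real" where
  "gradf W k a b = Tv W k a * Bv W (k - 1) b"
definition G2 :: "net \<Rightarrow> real" where
  "G2 W = (\<Sum>m<L. \<Sum>a<dims (Suc m). \<Sum>b<dims m. (gradf W (Suc m) a b)\<^sup>2)"
definition NN :: "net \<Rightarrow> nat \<Rightarrow> nat \<Rightarrow> nat \<Rightarrow> real" where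
  "NN W k b c = (\<Sum>a<dims (Suc k). W (Suc k) a b * W (Suc k) a c) - (\<Sum>e<dims (k - 1). W k b e * W k c e)"
definition F2 :: "net \<Rightarrow> nat \<Rightarrow> real" where
  "F2 W k = (\<Sum>i<dims k. \<Sum>j<dims (k - 1). (W k i j)\<^sup>2)"

lemma R1:
  assumes "Suc (Suc m) \<le> L" "c < dims (Suc m)" "0 < dims L"
  shows "Tv W (Suc m) c = (\<Sum>a<dims (Suc (Suc m)). Tv W (Suc (Suc m)) a * W (Suc (Suc m)) a c)"
proof -
  have e: "L - Suc m = 1 + (L - Suc (Suc m))" "Suc m + 1 = Suc (Suc m)" "Suc m + 1 + (L - Suc (Suc m)) = L"
    using assms by auto
  have "Tv W (Suc m) c = (\<Sum>a<dims (Suc m + 1). Q dims W (Suc m + 1) (L - Suc (Suc m)) 0 a * Q dims W (Suc m) 1 a c)"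
    unfolding Tv_def e(1) by (rule Q_split) (simp only: e(3) assms(3))
  also have "\<dots> = (\<Sum>a<dims (Suc (Suc m)). Q dims W (Suc (Suc m)) (L - Suc (Suc m)) 0 a * Q dims W (Suc m) 1 a c)"
    by (simp only: e(2))
  also have "\<dots> = (\<Sum>a<dims (Suc (Suc m)). Tv W (Suc (Suc m)) a * W (Suc (Suc m)) a c)"
  proof (intro sum.cong refl)
    fix a
    have "Q dims W (Suc m) 1 a c = (\<Sum>e<dims (Suc m). (if e = c then 1 else 0) * W (Suc (Suc m)) a e)"
      by (simp add: mult.commute)
    also have "\<dots> = W (Suc (Suc m)) a c" using assms(2) by (rule sum_delta_left)
    finally show "Q dims W (Suc (Suc m)) (L - Suc (Suc m)) 0 a * Q dims W (Suc m) 1 a c = Tv W (Suc (Suc m)) a * W (Suc (Suc m)) a c"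
      by (simp add: Tv_def)
  qed
  finally show ?thesis .
qed

lemma R2: "Bv W (Suc m) a = (\<Sum>b<dims m. W (Suc m) a b * Bv W m b)"
  unfolding Bv_def by (simp add: sum_distrib_left sum_distrib_right mult.assoc sum.swap[of _ "{..<dims m}"])

lemma F2_NN: "F2 W (Suc k) - F2 W k = (\<Sum>b<dims k. NN W k b b)"
  unfolding F2_def NN_def sum_subtractf by (simp add: power2_eq_square sum.swap[of _ "{..<dims k}"])

end

locale flow = setting +
  fixes Wt :: "real \<Rightarrow> net"
  assumes dL: "dims L = 1" and L2: "2 \<le> L"
    and flow: "\<forall>t\<ge>0. \<forall>k\<in>{1..L}. \<forall>i<dims k. \<forall>j<dims (k - 1).
                 ((\<lambda>s. Wt s k i j) has_real_derivative
                    - grad_entry (risk loss n x y dims L) (Wt t) k i j) (at t within {0..})"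
begin

lemma WD: "t \<ge> 0 \<Longrightarrow> k \<in> {1..L} \<Longrightarrow> i < dims k \<Longrightarrow> j < dims (k - 1) \<Longrightarrow>
   ((\<lambda>s. Wt s k i j) has_real_derivative - gradf (Wt t) k i j) (at t within {0..})"
proof -
  assume a: "t \<ge> 0" "k \<in> {1..L}" "i < dims k" "j < dims (k - 1)"
  then obtain m where m: "k = Suc m" by (cases k) auto
  have "grad_entry RR (Wt t) k i j = gradf (Wt t) k i j"
    unfolding m gradf_def using grad_formula[of m i j "Wt t"] a m by simp
  moreover have "((\<lambda>s. Wt s k i j) has_real_derivative - grad_entry RR (Wt t) k i j) (at t within {0..})"
    using flow a by blast
  ultimately show ?thesis by simp
qed

lemma RRd: "t \<ge> 0 \<Longrightarrow> ((\<lambda>s. RR (Wt s)) has_real_derivative - G2 (Wt t)) (at t within {0..})"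
proof -
  assume t: "t \<ge> 0"
  have "((\<lambda>s. RR (Wt s)) has_real_derivative
     (\<Sum>m<L. \<Sum>a<dims (Suc m). \<Sum>b<dims m. Tv (Wt t) (Suc m) a * Bv (Wt t) m b * (- gradf (Wt t) (Suc m) a b)))
     (at t within {0..})"
    by (rule RR_deriv) (use WD t dL in auto)
  also have "(\<Sum>m<L. \<Sum>a<dims (Suc m). \<Sum>b<dims m. Tv (Wt t) (Suc m) a * Bv (Wt t) m b * (- gradf (Wt t) (Suc m) a b))
     = - G2 (Wt t)"
    unfolding G2_def gradf_def by (simp add: power2_eq_square sum_negf)
  finally show ?thesis .
qed

lemma G2_nonneg: "G2 W \<ge> 0"
  unfolding G2_def by (intro sum_nonneg) auto

lemma R_mono: "0 \<le> s \<Longrightarrow> s \<le> t \<Longrightarrow> RR (Wt t) \<le> RR (Wt s)"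
  by (rule antimono_deriv[of 0 _ "\<lambda>t. - G2 (Wt t)"]) (use RRd G2_nonneg in auto)

lemma NN_const:
  assumes "1 \<le> k" "Suc k \<le> L" "b < dims k" "c < dims k" "t \<ge> 0"
  shows "NN (Wt t) k b c = NN (Wt 0) k b c"
proof -
  obtain m where m: "k = Suc m" using assms(1) by (cases k) auto
  have D: "((\<lambda>s. NN (Wt s) k b c) has_real_derivative 0) (at t within {0..})" if t: "t \<ge> 0" for t
  proof -
    let ?W = "Wt t"
    have d1: "((\<lambda>s. Wt s (Suc k) a e) has_real_derivative - gradf ?W (Suc k) a e) (at t within {0..})"
      if "a < dims (Suc k)" "e < dims k" for a e
      using WD[OF t, of "Suc k" a e] that assms by auto
    have d2: "((\<lambda>s. Wt s k a e) has_real_derivative - gradf ?W k a e) (at t within {0..})"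
      if "a < dims k" "e < dims (k - 1)" for a e
      using WD[OF t, of k a e] that assms by auto
    have "((\<lambda>s. NN (Wt s) k b c) has_real_derivative
        (\<Sum>a<dims (Suc k). - gradf ?W (Suc k) a b * ?W (Suc k) a c + - gradf ?W (Suc k) a c * ?W (Suc k) a b)
        - (\<Sum>e<dims (k - 1). - gradf ?W k b e * ?W k c e + - gradf ?W k c e * ?W k b e)) (at t within {0..})"
      unfolding NN_def
      by (intro DERIV_diff DERIV_sum DERIV_mult d1 d2) (use assms in auto)
    also have "(\<Sum>a<dims (Suc k). - gradf ?W (Suc k) a b * ?W (Suc k) a c + - gradf ?W (Suc k) a c * ?W (Suc k) a b)
        - (\<Sum>e<dims (k - 1). - gradf ?W k b e * ?W k c e + - gradf ?W k c e * ?W k b e) = 0"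
    proof -
      have A: "(\<Sum>a<dims (Suc k). - gradf ?W (Suc k) a b * ?W (Suc k) a c + - gradf ?W (Suc k) a c * ?W (Suc k) a b)
          = - (Bv ?W k b * Tv ?W k c + Bv ?W k c * Tv ?W k b)"
      proof -
        have dl: "0 < dims L" using dL by simp
        have "(\<Sum>a<dims (Suc k). - gradf ?W (Suc k) a b * ?W (Suc k) a c + - gradf ?W (Suc k) a c * ?W (Suc k) a b)
          = - (Bv ?W k b * (\<Sum>a<dims (Suc k). Tv ?W (Suc k) a * ?W (Suc k) a c) + Bv ?W k c * (\<Sum>a<dims (Suc k). Tv ?W (Suc k) a * ?W (Suc k) a b))"
        proof -
          have "(\<Sum>a<dims (Suc k). - gradf ?W (Suc k) a b * ?W (Suc k) a c + - gradf ?W (Suc k) a c * ?W (Suc k) a b)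
             = (\<Sum>a<dims (Suc k). - (Bv ?W k b * (Tv ?W (Suc k) a * ?W (Suc k) a c)) + - (Bv ?W k c * (Tv ?W (Suc k) a * ?W (Suc k) a b)))"
            by (intro sum.cong refl) (simp add: gradf_def algebra_simps)
          also have "\<dots> = - (Bv ?W k b * (\<Sum>a<dims (Suc k). Tv ?W (Suc k) a * ?W (Suc k) a c) + Bv ?W k c * (\<Sum>a<dims (Suc k). Tv ?W (Suc k) a * ?W (Suc k) a b))"
            by (simp only: sum.distrib sum_negf sum_distrib_left minus_add_distrib)
          finally show ?thesis .
        qed
        also have "\<dots> = - (Bv ?W k b * Tv ?W k c + Bv ?W k c * Tv ?W k b)"
          unfolding m using R1[OF assms(2)[unfolded m] assms(4)[unfolded m] dl, of ?W]
            R1[OF assms(2)[unfolded m] assms(3)[unfolded m] dl, of ?W] by simp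
        finally show ?thesis .
      qed
      have B: "(\<Sum>e<dims (k - 1). - gradf ?W k b e * ?W k c e + - gradf ?W k c e * ?W k b e)
          = - (Tv ?W k b * Bv ?W k c + Tv ?W k c * Bv ?W k b)"
      proof -
        have "(\<Sum>e<dims (k - 1). - gradf ?W k b e * ?W k c e + - gradf ?W k c e * ?W k b e)
           = (\<Sum>e<dims m. - (Tv ?W k b * (?W (Suc m) c e * Bv ?W m e)) + - (Tv ?W k c * (?W (Suc m) b e * Bv ?W m e)))"
          by (intro sum.cong) (simp_all add: gradf_def m algebra_simps)
        also have "\<dots> = - (Tv ?W k b * Bv ?W k c + Tv ?W k c * Bv ?W k b)"
          unfolding m R2 by (simp only: sum.distrib sum_negf sum_distrib_left minus_add_distrib)
        finally show ?thesis .
      qed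
      show ?thesis unfolding A B by simp
    qed
    finally show ?thesis .
  qed
  have "\<exists>C. \<forall>t\<in>{0..}. NN (Wt t) k b c = C"
    by (rule has_field_derivative_zero_constant) (use D in auto)
  then show ?thesis using assms(5) by auto
qed

end

locale full = flow +
  assumes labels: "\<forall>i<n. y i = -1 \<or> y i = 1"
    and xbound: "\<forall>i<n. vnorm (dims 0) (x i) \<le> 1"
    and separable: "\<exists>w. vnorm (dims 0) w = 1 \<and> (\<forall>i<n. vinner (dims 0) w (zvec x y i) > 0)"
    and loss_C1: "continuous_on UNIV (deriv loss)"
    and loss_dec: "\<forall>s. deriv loss s < 0"
    and loss_bot: "filterlim loss at_top at_bot"
    and loss_top: "(loss \<longlongrightarrow> 0) at_top"
    and init_grad: "\<exists>k\<in>{1..L}. \<exists>i<dims k. \<exists>j<dims (k - 1).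
                 grad_entry (risk loss n x y dims L) (Wt 0) k i j \<noteq> 0"
    and init_risk: "risk loss n x y dims L (Wt 0) \<le> loss 0"
begin

lemma loss_strict: "s < t \<Longrightarrow> loss t < loss s"
  by (rule DERIV_neg_imp_decreasing[of s t loss]) (use loss_deriv loss_dec in blast)+

lemma loss_mono: "s \<le> t \<Longrightarrow> loss t \<le> loss s"
  using loss_strict[of s t] by (cases "s = t") auto

lemma loss_pos: "loss s > 0"
proof -
  have "0 \<le> loss (s + 1)"
  proof (rule tendsto_upperbound[OF loss_top])
    show "\<forall>\<^sub>F t in at_top. loss t \<le> loss (s + 1)"
      using eventually_ge_at_top[of "s + 1"] by eventually_elim (rule loss_mono)
  qed simp
  then show ?thesis using loss_strict[of s "s + 1"] by simp
qed

lemma loss_cont: "isCont loss s"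
  using loss_deriv DERIV_isCont by blast

lemma z_bound: "i < n \<Longrightarrow> (\<Sum>j<dims 0. (zvec x y i j)\<^sup>2) \<le> 1"
proof -
  assume i: "i < n"
  have "(y i)\<^sup>2 = 1" using labels i by auto
  then have "(\<Sum>j<dims 0. (zvec x y i j)\<^sup>2) = (\<Sum>j<dims 0. (x i j)\<^sup>2)"
    by (simp add: zvec_def power_mult_distrib)
  also have "\<dots> \<le> 1" using xbound i unfolding vnorm_def by simp
  finally show ?thesis .
qed

lemma n_pos: "n > 0"
proof (rule ccontr)
  assume "\<not> n > 0"
  then have "n = 0" by simp
  then have "gv W j = 0" for W j unfolding gv_def by simp
  then have "Bv W m b = 0" for W m b by (simp add: Bv_def)
  then have "grad_entry RR (Wt 0) k i j = 0" if kk: "k \<in> {1..L}" "i < dims k" "j < dims (k - 1)" for k i j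
  proof -
    obtain m where m: "k = Suc m" using kk by (cases k) auto
    show ?thesis using grad_formula[of m i j "Wt 0"] kk \<open>\<And>W m b. Bv W m b = 0\<close> unfolding m by simp
  qed
  then show False using init_grad by blast
qed

lemma RR_nonneg: "RR W \<ge> 0"
  unfolding RR_cc using loss_pos by (intro mult_nonneg_nonneg sum_nonneg) (auto intro: less_imp_le)

definition pn :: "net \<Rightarrow> real" where "pn W = sqrt (\<Sum>j<dims 0. (P W L 0 j)\<^sup>2)"

lemma cc_le: "i < n \<Longrightarrow> cc W i \<le> pn W"
proof -
  assume i: "i < n"
  have "cc W i \<le> pn W * sqrt (\<Sum>j<dims 0. (zvec x y i j)\<^sup>2)"
    unfolding cc_def pn_def by (rule CS1)
  also have "\<dots> \<le> pn W * 1"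
    using z_bound[OF i] by (intro mult_left_mono) (auto simp: pn_def intro: sum_nonneg)
  finally show ?thesis by simp
qed


lemma dL_pos: "0 < dims L" using dL by simp

lemma p1: "j < dims 0 \<Longrightarrow> P W L 0 j = (\<Sum>a<dims 1. Tv W 1 a * W 1 a j)"
proof -
  assume j: "j < dims 0"
  have e: "L = 1 + (L - 1)" "0 + 1 + (L - 1) = L" using L2 by auto
  have "P W L 0 j = Q dims W 0 (1 + (L - 1)) 0 j" unfolding prodmat_Q using e(1) by simp
  also have "\<dots> = (\<Sum>c<dims (0 + 1). Q dims W (0 + 1) (L - 1) 0 c * Q dims W 0 1 c j)"
    by (rule Q_split) (simp only: e(2) dL_pos)
  also have "\<dots> = (\<Sum>c<dims 1. Q dims W 1 (L - 1) 0 c * Q dims W 0 1 c j)"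
    by (simp only: add_0)
  also have "\<dots> = (\<Sum>a<dims 1. Tv W 1 a * W 1 a j)"
  proof (intro sum.cong refl)
    fix a
    have "Q dims W 0 1 a j = (\<Sum>e<dims 0. (if e = j then 1 else 0) * W 1 a e)" by (simp add: mult.commute)
    also have "\<dots> = W 1 a j" using j by (rule sum_delta_left)
    finally show "Q dims W 1 (L - 1) 0 a * Q dims W 0 1 a j = Tv W 1 a * W 1 a j" by (simp add: Tv_def)
  qed
  finally show ?thesis by simp
qed

definition tn :: "net \<Rightarrow> real" where "tn W = sqrt (\<Sum>a<dims 1. (Tv W 1 a)\<^sup>2)"
definition gn :: "net \<Rightarrow> real" where "gn W = sqrt (\<Sum>b<dims 0. (gv W b)\<^sup>2)"

lemma p2: "pn W \<le> tn W * sqrt (F2 W 1)"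
proof -
  have "(\<Sum>j<dims 0. (P W L 0 j)\<^sup>2) \<le> (\<Sum>j<dims 0. (\<Sum>a<dims 1. (Tv W 1 a)\<^sup>2) * (\<Sum>a<dims 1. (W 1 a j)\<^sup>2))"
    by (intro sum_mono) (simp add: p1 Cauchy_Schwarz_ineq_sum)
  also have "\<dots> = (\<Sum>a<dims 1. (Tv W 1 a)\<^sup>2) * F2 W 1"
    unfolding F2_def by (simp add: sum_distrib_left sum.swap[of _ "{..<dims 0}"])
  finally have "(\<Sum>j<dims 0. (P W L 0 j)\<^sup>2) \<le> (\<Sum>a<dims 1. (Tv W 1 a)\<^sup>2) * F2 W 1" .
  then show ?thesis unfolding pn_def tn_def by (metis real_sqrt_le_iff real_sqrt_mult)
qed

lemma p3: "b < dims 0 \<Longrightarrow> Bv W 0 b = gv W b"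
proof -
  assume b: "b < dims 0"
  have "Bv W 0 b = (\<Sum>j<dims 0. (if j = b then 1 else 0) * gv W j)"
    unfolding Bv_def by (intro sum.cong refl) auto
  also have "\<dots> = gv W b" using b by (rule sum_delta_left)
  finally show ?thesis .
qed

lemma G1_eq: "(\<Sum>a<dims 1. \<Sum>b<dims 0. (gradf W 1 a b)\<^sup>2) = (tn W)\<^sup>2 * (gn W)\<^sup>2"
proof -
  have "(\<Sum>a<dims 1. \<Sum>b<dims 0. (gradf W 1 a b)\<^sup>2) = (\<Sum>a<dims 1. \<Sum>b<dims 0. (Tv W 1 a)\<^sup>2 * (gv W b)\<^sup>2)"
    by (intro sum.cong refl) (simp add: gradf_def p3 power_mult_distrib)
  also have "\<dots> = (tn W)\<^sup>2 * (gn W)\<^sup>2"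
    by (simp add: tn_def gn_def sum_nonneg sum_product)
  finally show ?thesis .
qed

lemma p4: "G2 W \<ge> (tn W)\<^sup>2 * (gn W)\<^sup>2"
proof -
  have "G2 W = (\<Sum>m\<in>{..<L}. \<Sum>a<dims (Suc m). \<Sum>b<dims m. (gradf W (Suc m) a b)\<^sup>2)" by (simp add: G2_def)
  also have "\<dots> \<ge> (\<Sum>m\<in>{0}. \<Sum>a<dims (Suc m). \<Sum>b<dims m. (gradf W (Suc m) a b)\<^sup>2)"
    by (intro sum_mono2) (use L2 in \<open>auto intro!: sum_nonneg\<close>)
  finally show ?thesis using G1_eq by simp
qed

lemma F2_1_deriv: "t \<ge> 0 \<Longrightarrow> ((\<lambda>s. F2 (Wt s) 1) has_real_derivative
   (\<Sum>a<dims 1. \<Sum>b<dims 0. 2 * Wt t 1 a b * (- gradf (Wt t) 1 a b))) (at t within {0..})"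
proof -
  assume t: "t \<ge> 0"
  have d: "((\<lambda>s. Wt s 1 a b) has_real_derivative - gradf (Wt t) 1 a b) (at t within {0..})"
    if "a < dims 1" "b < dims 0" for a b using WD[OF t, of 1 a b] that L2 by auto
  have F: "F2 W 1 = (\<Sum>a<dims 1. \<Sum>b<dims 0. (W 1 a b)\<^sup>2)" for W by (simp add: F2_def)
  show ?thesis unfolding F
  proof (intro DERIV_sum)
    fix a b assume ab: "a \<in> {..<dims 1}" "b \<in> {..<dims 0}"
    have "((\<lambda>s. (Wt s 1 a b)\<^sup>2) has_real_derivative of_nat 2 * (- gradf (Wt t) 1 a b * (Wt t 1 a b) ^ (2 - Suc 0))) (at t within {0..})"
      by (rule DERIV_power) (use d ab in auto)
    then show "((\<lambda>s. (Wt s 1 a b)\<^sup>2) has_real_derivative 2 * Wt t 1 a b * (- gradf (Wt t) 1 a b)) (at t within {0..})"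
      by (simp add: algebra_simps)
  qed
qed

lemma F2_1_deriv_le: "(\<Sum>a<dims 1. \<Sum>b<dims 0. 2 * W 1 a b * (- gradf W 1 a b)) \<le> 2 * sqrt (F2 W 1) * sqrt (G2 W)"
proof -
  have "(\<Sum>a<dims 1. \<Sum>b<dims 0. 2 * W 1 a b * (- gradf W 1 a b)) = 2 * (\<Sum>a<dims 1. \<Sum>b<dims 0. W 1 a b * (- gradf W 1 a b))"
    by (simp add: sum_distrib_left mult.assoc)
  also have "\<dots> \<le> 2 * (sqrt (F2 W 1) * sqrt (\<Sum>a<dims 1. \<Sum>b<dims 0. (- gradf W 1 a b)\<^sup>2))"
    using CS2[where A="{..<dims 1}" and B="{..<dims 0}" and a="\<lambda>a b. W 1 a b" and b="\<lambda>a b. - gradf W 1 a b"] by (simp add: F2_def)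
  also have "(\<Sum>a<dims 1. \<Sum>b<dims 0. (- gradf W 1 a b)\<^sup>2) \<le> G2 W"
    using p4[of W] G1_eq[of W] by simp
  then have "2 * (sqrt (F2 W 1) * sqrt (\<Sum>a<dims 1. \<Sum>b<dims 0. (- gradf W 1 a b)\<^sup>2)) \<le> 2 * (sqrt (F2 W 1) * sqrt (G2 W))"
    by (intro mult_left_mono) (auto simp: F2_def intro!: sum_nonneg)
  finally show ?thesis by simp
qed


definition wsep :: "nat \<Rightarrow> real" where
  "wsep = (SOME w. vnorm (dims 0) w = 1 \<and> (\<forall>i<n. vinner (dims 0) w (zvec x y i) > 0))"

lemma wsep: "vnorm (dims 0) wsep = 1" "i < n \<Longrightarrow> vinner (dims 0) wsep (zvec x y i) > 0"
  using someI_ex[OF separable] unfolding wsep_def[symmetric] by auto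

definition gam :: real where
  "gam = Min ((\<lambda>i. vinner (dims 0) wsep (zvec x y i)) ` {..<n})"

lemma gam_le: "i < n \<Longrightarrow> gam \<le> vinner (dims 0) wsep (zvec x y i)"
  unfolding gam_def by (rule Min_le) auto

lemma gam_pos: "gam > 0"
proof -
  have "gam \<in> (\<lambda>i. vinner (dims 0) wsep (zvec x y i)) ` {..<n}"
    unfolding gam_def using n_pos by (intro Min_in) auto
  then show ?thesis using wsep(2) by auto
qed

lemma gn_lower:
  assumes i0: "i0 < n" and k: "- deriv loss (cc W i0) \<ge> \<kappa>"
  shows "gn W \<ge> gam * \<kappa> / real n"
proof -
  have "(\<Sum>b<dims 0. (- gv W b) * wsep b) = (1 / real n) * (\<Sum>i<n. (- deriv loss (cc W i)) * vinner (dims 0) wsep (zvec x y i))"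
    unfolding gv_def vinner_def
    by (simp add: sum_distrib_left sum_distrib_right sum_negf algebra_simps sum.swap[of _ "{..<n}"])
  also have "\<dots> \<ge> (1 / real n) * ((- deriv loss (cc W i0)) * vinner (dims 0) wsep (zvec x y i0))"
  proof (intro mult_left_mono)
    show "(- deriv loss (cc W i0)) * vinner (dims 0) wsep (zvec x y i0) \<le> (\<Sum>i<n. (- deriv loss (cc W i)) * vinner (dims 0) wsep (zvec x y i))"
    proof (rule member_le_sum[where f="\<lambda>i. (- deriv loss (cc W i)) * vinner (dims 0) wsep (zvec x y i)"])
      fix i assume "i \<in> {..<n} - {i0}"
      then have "0 < vinner (dims 0) wsep (zvec x y i)" "0 < - deriv loss (cc W i)" using wsep(2) loss_dec by auto
      then show "0 \<le> (- deriv loss (cc W i)) * vinner (dims 0) wsep (zvec x y i)" by (simp add: mult_neg_pos less_imp_le)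
    qed (use i0 in auto)
  qed simp
  finally have A: "(1 / real n) * ((- deriv loss (cc W i0)) * vinner (dims 0) wsep (zvec x y i0)) \<le> (\<Sum>b<dims 0. (- gv W b) * wsep b)" .
  have "gam * \<kappa> \<le> vinner (dims 0) wsep (zvec x y i0) * (- deriv loss (cc W i0))"
  proof (cases "\<kappa> \<ge> 0")
    case True
    then show ?thesis using gam_le[OF i0] gam_pos k by (intro mult_mono) auto
  next
    case False
    then have "gam * \<kappa> \<le> 0" using gam_pos by (simp add: mult_pos_neg less_imp_le)
    also have "0 \<le> vinner (dims 0) wsep (zvec x y i0) * (- deriv loss (cc W i0))"
      using wsep(2)[OF i0] loss_dec by (intro mult_nonneg_nonneg) (auto intro: less_imp_le)
    finally show ?thesis .
  qed
  then have "gam * \<kappa> / real n \<le> (vinner (dims 0) wsep (zvec x y i0) * (- deriv loss (cc W i0))) / real n"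
    by (rule divide_right_mono) simp
  also have "\<dots> = (1 / real n) * ((- deriv loss (cc W i0)) * vinner (dims 0) wsep (zvec x y i0))"
    by (simp add: mult.commute)
  finally have B: "gam * \<kappa> / real n \<le> (1 / real n) * ((- deriv loss (cc W i0)) * vinner (dims 0) wsep (zvec x y i0))" .
  have C: "(\<Sum>b<dims 0. (- gv W b) * wsep b) \<le> gn W"
  proof -
    have "(\<Sum>b<dims 0. (- gv W b) * wsep b) \<le> sqrt (\<Sum>b<dims 0. (- gv W b)\<^sup>2) * sqrt (\<Sum>b<dims 0. (wsep b)\<^sup>2)"
      by (rule CS1)
    also have "\<dots> = gn W" using wsep(1) by (simp add: gn_def vnorm_def)
    finally show ?thesis .
  qed
  show ?thesis using A B C by linarith
qed


lemma sum_loss: "(\<Sum>i<n. loss (cc W i)) = real n * RR W"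
  unfolding RR_cc using n_pos by simp

lemma per_W:
  assumes eps: "\<epsilon> > 0" and del: "\<delta> > 0" "loss \<delta> > r"
    and hlo: "loss m_lo > real n * loss 0" and hM: "loss M < \<epsilon>"
    and hk: "\<forall>s\<in>{m_lo..M}. - deriv loss s \<ge> \<kappa>"
    and R1: "RR W \<ge> \<epsilon>" and R2: "RR W \<le> r" and R3: "RR W \<le> loss 0"
  shows "sqrt (F2 W 1) * sqrt (G2 W) \<ge> \<delta> * (gam * \<kappa> / real n)" "F2 W 1 > 0"
proof -
  have lo: "cc W i > m_lo" if i: "i < n" for i
  proof (rule ccontr)
    assume "\<not> cc W i > m_lo"
    then have "loss (cc W i) \<ge> loss m_lo" using loss_mono by simp
    moreover have "loss (cc W i) \<le> (\<Sum>i<n. loss (cc W i))"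
      by (rule member_le_sum) (use i loss_pos in \<open>auto intro: less_imp_le\<close>)
    moreover have "(\<Sum>i<n. loss (cc W i)) \<le> real n * loss 0"
      unfolding sum_loss using R3 by (simp add: mult_left_mono)
    ultimately show False using hlo by simp
  qed
  obtain i0 where i0: "i0 < n" "loss (cc W i0) \<ge> \<epsilon>"
  proof (rule ccontr)
    assume "\<not> thesis"
    then have "\<forall>i<n. loss (cc W i) < \<epsilon>" using that by force
    then have "(\<Sum>i<n. loss (cc W i)) < (\<Sum>i<n. \<epsilon>)"
      using n_pos by (intro sum_strict_mono) auto
    then show False using R1 n_pos unfolding sum_loss by simp
  qed
  have "cc W i0 < M"
  proof (rule ccontr)
    assume "\<not> cc W i0 < M"
    then have "loss (cc W i0) \<le> loss M" using loss_mono by simp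
    then show False using i0 hM by simp
  qed
  then have "- deriv loss (cc W i0) \<ge> \<kappa>" using hk lo[OF i0(1)] by auto
  then have gn: "gn W \<ge> gam * \<kappa> / real n" by (rule gn_lower[OF i0(1)])
  obtain i1 where i1: "i1 < n" "loss (cc W i1) \<le> r"
  proof (rule ccontr)
    assume "\<not> thesis"
    then have "\<forall>i<n. loss (cc W i) > r" using that by force
    then have "(\<Sum>i<n. r) < (\<Sum>i<n. loss (cc W i))"
      using n_pos by (intro sum_strict_mono) auto
    then show False using R2 n_pos unfolding sum_loss by simp
  qed
  have "cc W i1 > \<delta>"
  proof (rule ccontr)
    assume "\<not> cc W i1 > \<delta>"
    then have "loss (cc W i1) \<ge> loss \<delta>" using loss_mono by simp
    then show False using i1 del by simp
  qed
  then have pn: "pn W > \<delta>" using cc_le[OF i1(1), of W] by simp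
  then have tf: "tn W * sqrt (F2 W 1) > \<delta>" using p2[of W] by simp
  have tn0: "tn W \<ge> 0" "sqrt (F2 W 1) \<ge> 0" by (auto simp: tn_def F2_def intro!: sum_nonneg)
  show "F2 W 1 > 0"
  proof (rule ccontr)
    assume "\<not> F2 W 1 > 0"
    then have "sqrt (F2 W 1) \<le> 0" by simp
    then have "tn W * sqrt (F2 W 1) \<le> 0" using tn0 by (simp add: mult_nonneg_nonpos)
    then show False using tf del by simp
  qed
  have gpos: "gam * \<kappa> / real n \<ge> 0 \<or> gam * \<kappa> / real n < 0" by auto
  have "sqrt (G2 W) \<ge> tn W * gn W"
  proof -
    have "tn W * gn W \<ge> 0" by (auto simp: tn_def gn_def intro!: sum_nonneg mult_nonneg_nonneg)
    moreover have "(tn W * gn W)\<^sup>2 \<le> G2 W" using p4[of W] by (simp add: power_mult_distrib)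
    ultimately show ?thesis using real_le_rsqrt by blast
  qed
  then have "sqrt (F2 W 1) * sqrt (G2 W) \<ge> sqrt (F2 W 1) * (tn W * gn W)"
    using tn0 by (simp add: mult_left_mono)
  also have "sqrt (F2 W 1) * (tn W * gn W) = (tn W * sqrt (F2 W 1)) * gn W" by simp
  finally have X: "sqrt (F2 W 1) * sqrt (G2 W) \<ge> (tn W * sqrt (F2 W 1)) * gn W" .
  show "sqrt (F2 W 1) * sqrt (G2 W) \<ge> \<delta> * (gam * \<kappa> / real n)"
  proof (cases "gam * \<kappa> / real n \<ge> 0")
    case True
    have "\<delta> * (gam * \<kappa> / real n) \<le> (tn W * sqrt (F2 W 1)) * gn W"
      using tf gn True del by (intro mult_mono) auto
    then show ?thesis using X by simp
  next
    case False
    then have "\<delta> * (gam * \<kappa> / real n) \<le> 0" using del by (intro mult_nonneg_nonpos) auto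
    also have "0 \<le> sqrt (F2 W 1) * sqrt (G2 W)" using G2_nonneg tn0 by simp
    finally show ?thesis .
  qed
qed


lemma G2_0_pos: "G2 (Wt 0) > 0"
proof -
  obtain k a b where kab: "k \<in> {1..L}" "a < dims k" "b < dims (k - 1)" "grad_entry RR (Wt 0) k a b \<noteq> 0"
    using init_grad by blast
  obtain m where m: "k = Suc m" using kab by (cases k) auto
  have g: "gradf (Wt 0) (Suc m) a b \<noteq> 0"
    using kab grad_formula[of m a b "Wt 0"] unfolding m gradf_def by simp
  have "0 < (gradf (Wt 0) (Suc m) a b)\<^sup>2" using g by simp
  also have "\<dots> \<le> (\<Sum>b<dims m. (gradf (Wt 0) (Suc m) a b)\<^sup>2)"
    by (rule member_le_sum) (use kab m in auto)
  also have "\<dots> \<le> (\<Sum>a<dims (Suc m). \<Sum>b<dims m. (gradf (Wt 0) (Suc m) a b)\<^sup>2)"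
    by (rule member_le_sum[where f="\<lambda>a. \<Sum>b<dims m. (gradf (Wt 0) (Suc m) a b)\<^sup>2"]) (use kab m in \<open>auto intro: sum_nonneg\<close>)
  also have "\<dots> \<le> G2 (Wt 0)"
    unfolding G2_def
    by (rule member_le_sum[where f="\<lambda>m. \<Sum>a<dims (Suc m). \<Sum>b<dims m. (gradf (Wt 0) (Suc m) a b)\<^sup>2"])
       (use kab m in \<open>auto intro!: sum_nonneg\<close>)
  finally show ?thesis .
qed

lemma strict0: "\<exists>t0>0. RR (Wt t0) < RR (Wt 0)"
proof -
  have "- G2 (Wt 0) < 0" using G2_0_pos by simp
  from has_real_derivative_neg_dec_right[OF RRd[of 0] this] obtain d where
    d: "d > 0" "\<forall>h>0. 0 + h \<in> {0..} \<longrightarrow> h < d \<longrightarrow> RR (Wt 0) > RR (Wt (0 + h))" by auto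
  then have "RR (Wt (d/2)) < RR (Wt 0)" by auto
  then show ?thesis using d by (intro exI[of _ "d/2"]) auto
qed


lemma no_eps:
  assumes eps: "\<epsilon> > 0"
  shows "\<exists>t\<ge>0. RR (Wt t) < \<epsilon>"
proof (rule ccontr)
  assume "\<not> ?thesis"
  then have Rge: "\<And>t. t \<ge> 0 \<Longrightarrow> RR (Wt t) \<ge> \<epsilon>" by (auto simp: not_less)
  obtain t0 where t0: "t0 > 0" "RR (Wt t0) < RR (Wt 0)" using strict0 by blast
  define r where "r = RR (Wt t0)"
  have r: "r < loss 0" using t0 init_risk unfolding r_def by simp
  obtain \<delta> where del: "\<delta> > 0" "loss \<delta> > r"
  proof -
    have "\<forall>\<^sub>F s in at 0. r < loss s"
      using order_tendstoD(1)[OF loss_cont[of 0, unfolded isCont_def] r] .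
    then obtain d where d: "d > 0" "\<forall>s. s \<noteq> 0 \<and> dist s 0 < d \<longrightarrow> r < loss s"
      unfolding eventually_at by auto
    then show ?thesis using that[of "d/2"] by (auto simp: dist_real_def)
  qed
  obtain m_lo where hlo: "loss m_lo > real n * loss 0"
  proof -
    have "\<forall>\<^sub>F s in at_bot. real n * loss 0 + 1 \<le> loss s"
      using loss_bot unfolding filterlim_at_top by blast
    then obtain N where "\<forall>s\<le>N. real n * loss 0 + 1 \<le> loss s" unfolding eventually_at_bot_linorder by blast
    then show ?thesis using that[of N] by force
  qed
  obtain M where hM: "loss M < \<epsilon>"
  proof -
    have "\<forall>\<^sub>F s in at_top. loss s < \<epsilon>" using order_tendstoD(2)[OF loss_top eps] .
    then obtain N where "\<forall>s\<ge>N. loss s < \<epsilon>" unfolding eventually_at_top_linorder by blast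
    then show ?thesis using that[of N] by force
  qed
  obtain \<kappa> where kap: "\<kappa> > 0" "\<forall>s\<in>{m_lo..M}. - deriv loss s \<ge> \<kappa>"
  proof (cases "{m_lo..M} = {}")
    case True then show ?thesis using that[of 1] by auto
  next
    case False
    have "continuous_on {m_lo..M} (\<lambda>s. - deriv loss s)"
      using loss_C1 by (intro continuous_intros) (auto intro: continuous_on_subset)
    from continuous_attains_inf[OF compact_Icc False this] obtain s0 where
      s0: "s0 \<in> {m_lo..M}" "\<forall>s\<in>{m_lo..M}. - deriv loss s0 \<le> - deriv loss s" by blast
    show ?thesis using that[of "- deriv loss s0"] s0 loss_dec by force
  qed
  define K where "K = \<delta> * (gam * \<kappa> / real n)"
  have Kpos: "K > 0" unfolding K_def using del kap gam_pos n_pos by simp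
  have bnd: "sqrt (F2 (Wt t) 1) * sqrt (G2 (Wt t)) \<ge> K \<and> F2 (Wt t) 1 > 0" if t: "t \<ge> t0" for t
  proof -
    have a: "RR (Wt t) \<ge> \<epsilon>" using Rge t t0 by simp
    have b: "RR (Wt t) \<le> r" unfolding r_def using R_mono t t0 by simp
    have c: "RR (Wt t) \<le> loss 0" using R_mono[of 0 t] t t0 init_risk by simp
    show ?thesis using per_W[OF eps del hlo hM kap(2) a b c] unfolding K_def by simp
  qed
  define \<Phi> where "\<Phi> t = ln (F2 (Wt t) 1) + (2 / K) * RR (Wt t)" for t
  define \<Phi>' where "\<Phi>' t = inverse (F2 (Wt t) 1) * (\<Sum>a<dims 1. \<Sum>b<dims 0. 2 * Wt t 1 a b * (- gradf (Wt t) 1 a b))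
       + (2 / K) * (- G2 (Wt t))" for t
  have Phid: "(\<Phi> has_real_derivative \<Phi>' t) (at t within {t0..})" if t: "t0 \<le> t" for t
  proof -
    have t': "t \<ge> 0" using t t0 by simp
    have sub: "{t0..} \<subseteq> {0::real..}" using t0 by auto
    have F: "((\<lambda>s. F2 (Wt s) 1) has_real_derivative (\<Sum>a<dims 1. \<Sum>b<dims 0. 2 * Wt t 1 a b * (- gradf (Wt t) 1 a b))) (at t within {t0..})"
      by (rule DERIV_subset[OF F2_1_deriv[OF t'] sub])
    have R: "((\<lambda>s. RR (Wt s)) has_real_derivative - G2 (Wt t)) (at t within {t0..})"
      by (rule DERIV_subset[OF RRd[OF t'] sub])
    have "((\<lambda>s. ln (F2 (Wt s) 1)) has_real_derivative inverse (F2 (Wt t) 1) * (\<Sum>a<dims 1. \<Sum>b<dims 0. 2 * Wt t 1 a b * (- gradf (Wt t) 1 a b))) (at t within {t0..})"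
      by (rule DERIV_chain2[OF DERIV_ln F]) (use bnd[OF t] in simp)
    then show ?thesis unfolding \<Phi>_def \<Phi>'_def by (intro DERIV_add DERIV_cmult R)
  qed
  have Phin: "\<Phi>' t \<le> 0" if t: "t0 < t" for t
  proof -
    define f where "f = sqrt (F2 (Wt t) 1)"
    define g where "g = sqrt (G2 (Wt t))"
    have fg: "f * g \<ge> K" "F2 (Wt t) 1 > 0" using bnd[of t] t unfolding f_def g_def by auto
    have f0: "f > 0" using fg(2) unfolding f_def by simp
    have g0: "g \<ge> 0" unfolding g_def using G2_nonneg by simp
    have F2f: "F2 (Wt t) 1 = f\<^sup>2" unfolding f_def using fg(2) by simp
    have G2g: "G2 (Wt t) = g\<^sup>2" unfolding g_def using G2_nonneg by simp
    have d: "(\<Sum>a<dims 1. \<Sum>b<dims 0. 2 * Wt t 1 a b * (- gradf (Wt t) 1 a b)) \<le> 2 * f * g"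
      using F2_1_deriv_le unfolding f_def g_def by simp
    have "\<Phi>' t \<le> inverse (f\<^sup>2) * (2 * f * g) - (2 / K) * g\<^sup>2"
      unfolding \<Phi>'_def F2f G2g using d f0 by (simp add: mult_left_mono)
    also have "inverse (f\<^sup>2) * (2 * f * g) - (2 / K) * g\<^sup>2 = 2 * g * (K - f * g) / (f * K)"
      using f0 Kpos by (simp add: field_simps power2_eq_square)
    also have "\<dots> \<le> 0"
      using f0 Kpos g0 fg(1) by (intro divide_nonpos_pos mult_nonneg_nonpos) auto
    finally show ?thesis .
  qed
  define \<Lambda> where "\<Lambda> = ln (F2 (Wt t0) 1) + (2 / K) * RR (Wt t0)"
  have Fb: "F2 (Wt t) 1 \<le> exp \<Lambda>" if t: "t \<ge> t0" for t
  proof -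
    have "\<Phi> t \<le> \<Phi> t0" by (rule antimono_deriv[OF Phid Phin]) (use t in auto)
    then have "ln (F2 (Wt t) 1) \<le> \<Lambda>"
      unfolding \<Phi>_def \<Lambda>_def using RR_nonneg[of "Wt t"] Kpos by (smt (verit) divide_pos_pos mult_nonneg_nonneg)
    then show ?thesis using bnd[OF t] by (metis exp_le_cancel_iff exp_ln)
  qed
  define \<eta> where "\<eta> = K\<^sup>2 / exp \<Lambda>"
  have eta: "\<eta> > 0" unfolding \<eta>_def using Kpos by simp
  have Gb: "G2 (Wt t) \<ge> \<eta>" if t: "t \<ge> t0" for t
  proof -
    have "K\<^sup>2 \<le> (sqrt (F2 (Wt t) 1) * sqrt (G2 (Wt t)))\<^sup>2"
      using bnd[OF t] Kpos by (intro power_mono) auto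
    also have "\<dots> = F2 (Wt t) 1 * G2 (Wt t)" using bnd[OF t] G2_nonneg by (simp add: power_mult_distrib)
    also have "\<dots> \<le> exp \<Lambda> * G2 (Wt t)" using Fb[OF t] G2_nonneg by (simp add: mult_right_mono)
    finally show ?thesis unfolding \<eta>_def by (simp add: divide_le_eq mult.commute)
  qed
  define T where "T = t0 + RR (Wt t0) / \<eta> + 1"
  have T: "T \<ge> t0" unfolding T_def using RR_nonneg[of "Wt t0"] eta by simp
  have "RR (Wt T) + \<eta> * T \<le> RR (Wt t0) + \<eta> * t0"
  proof (rule antimono_deriv[where f="\<lambda>t. RR (Wt t) + \<eta> * t" and f'="\<lambda>t. - G2 (Wt t) + \<eta>" and a=t0])
    fix t assume t: "t0 \<le> t"
    have sub: "{t0..} \<subseteq> {0::real..}" using t0 by auto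
    have R: "((\<lambda>s. RR (Wt s)) has_real_derivative - G2 (Wt t)) (at t within {t0..})"
      by (rule DERIV_subset[OF RRd sub]) (use t t0 in simp)
    show "((\<lambda>t. RR (Wt t) + \<eta> * t) has_real_derivative - G2 (Wt t) + \<eta>) (at t within {t0..})"
      by (rule derivative_eq_intros R)+ auto
  next
    fix t assume "t0 < t" then show "- G2 (Wt t) + \<eta> \<le> 0" using Gb[of t] by simp
  qed (use T in auto)
  then have "RR (Wt T) \<le> RR (Wt t0) - \<eta> * (T - t0)" by (simp add: algebra_simps)
  also have "\<eta> * (T - t0) = RR (Wt t0) + \<eta>" unfolding T_def using eta by (simp add: field_simps)
  finally have "RR (Wt T) \<le> - \<eta>" by simp
  then show False using RR_nonneg[of "Wt T"] eta by simp
qed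

lemma R_lim: "((\<lambda>t. RR (Wt t)) \<longlongrightarrow> 0) at_top"
proof (rule order_tendstoI)
  fix a :: real assume "a < 0"
  then show "\<forall>\<^sub>F t in at_top. a < RR (Wt t)" using RR_nonneg by (intro always_eventually allI) (auto intro: less_le_trans)
next
  fix a :: real assume "0 < a"
  then obtain t1 where t1: "t1 \<ge> 0" "RR (Wt t1) < a" using no_eps by blast
  show "\<forall>\<^sub>F t in at_top. RR (Wt t) < a"
    using eventually_ge_at_top[of t1] by eventually_elim (use t1 R_mono in \<open>auto intro: le_less_trans\<close>)
qed


lemma cc_inf: "i < n \<Longrightarrow> filterlim (\<lambda>t. cc (Wt t) i) at_top at_top"
proof -
  assume i: "i < n"
  show ?thesis unfolding filterlim_at_top
  proof
    fix B :: real
    have "\<forall>\<^sub>F t in at_top. RR (Wt t) < loss B / real n"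
      using order_tendstoD(2)[OF R_lim] loss_pos n_pos by simp
    then show "\<forall>\<^sub>F t in at_top. B \<le> cc (Wt t) i"
    proof eventually_elim
      case (elim t)
      have "loss (cc (Wt t) i) \<le> (\<Sum>i<n. loss (cc (Wt t) i))"
        by (rule member_le_sum) (use i loss_pos in \<open>auto intro: less_imp_le\<close>)
      also have "\<dots> = real n * RR (Wt t)" by (rule sum_loss)
      also have "\<dots> < loss B" using elim n_pos by (simp add: field_simps)
      finally show ?case using loss_mono by (meson not_le less_imp_le loss_strict)
    qed
  qed
qed

lemma pn_inf: "filterlim (\<lambda>t. pn (Wt t)) at_top at_top"
  by (rule filterlim_at_top_mono[OF cc_inf[OF n_pos]]) (use cc_le n_pos in auto)

lemma dims0_pos: "dims 0 > 0"
proof (rule ccontr)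
  assume "\<not> dims 0 > 0"
  then show False using separable by (auto simp: vnorm_def)
qed

lemma frobP: "(\<Sum>i<dims m. \<Sum>j<dims 0. (P W m i j)\<^sup>2) \<le> real (dims 0) * (\<Prod>k\<in>{1..m}. F2 W k)"
proof (induction m)
  case 0
  have "(\<Sum>i<dims 0. \<Sum>j<dims 0. (P W 0 i j)\<^sup>2) = (\<Sum>i<dims 0. 1)"
  proof (intro sum.cong refl)
    fix i assume "i \<in> {..<dims 0}"
    then have "(\<Sum>j<dims 0. (P W 0 i j)\<^sup>2) = (\<Sum>j<dims 0. if j = i then 1 else 0)"
      by (intro sum.cong) auto
    then show "(\<Sum>j<dims 0. (P W 0 i j)\<^sup>2) = 1" using \<open>i \<in> {..<dims 0}\<close> by simp
  qed
  then show ?case by simp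
next
  case (Suc m)
  have "(\<Sum>i<dims (Suc m). \<Sum>j<dims 0. (P W (Suc m) i j)\<^sup>2)
     \<le> (\<Sum>i<dims (Suc m). \<Sum>j<dims 0. (\<Sum>c<dims m. (W (Suc m) i c)\<^sup>2) * (\<Sum>c<dims m. (P W m c j)\<^sup>2))"
    by (intro sum_mono) (simp add: Cauchy_Schwarz_ineq_sum)
  also have "\<dots> = F2 W (Suc m) * (\<Sum>j<dims 0. \<Sum>c<dims m. (P W m c j)\<^sup>2)"
    by (simp add: F2_def sum_product)
  also have "\<dots> = F2 W (Suc m) * (\<Sum>i<dims m. \<Sum>j<dims 0. (P W m i j)\<^sup>2)"
    by (subst sum.swap) (rule refl)
  also have "\<dots> \<le> F2 W (Suc m) * (real (dims 0) * (\<Prod>k\<in>{1..m}. F2 W k))"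
    by (intro mult_left_mono Suc.IH) (auto simp: F2_def intro!: sum_nonneg)
  also have "\<dots> = real (dims 0) * (\<Prod>k\<in>{1..Suc m}. F2 W k)"
    by (simp add: prod.nat_ivl_Suc' mult.commute mult.left_commute)
  finally show ?case .
qed

definition Fr :: "nat \<Rightarrow> real \<Rightarrow> real" where "Fr k t = sqrt (F2 (Wt t) k)"

lemma Fr_nonneg: "Fr k t \<ge> 0" by (auto simp: Fr_def F2_def intro!: sum_nonneg)

lemma pn_le: "pn W \<le> sqrt (real (dims 0)) * (\<Prod>k\<in>{1..L}. sqrt (F2 W k))"
proof -
  have "(\<Sum>j<dims 0. (P W L 0 j)\<^sup>2) = (\<Sum>i<dims L. \<Sum>j<dims 0. (P W L i j)\<^sup>2)"
    using dL by simp
  also have "\<dots> \<le> real (dims 0) * (\<Prod>k\<in>{1..L}. F2 W k)" by (rule frobP)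
  finally have "pn W \<le> sqrt (real (dims 0) * (\<Prod>k\<in>{1..L}. F2 W k))" unfolding pn_def by simp
  then show ?thesis by (simp add: real_sqrt_mult sqrt_prod)
qed


lemma F2_diff_const: "k \<in> {1..L} \<Longrightarrow> t \<ge> 0 \<Longrightarrow> F2 (Wt t) k - F2 (Wt t) 1 = F2 (Wt 0) k - F2 (Wt 0) 1"
proof (induction k)
  case 0 then show ?case by simp
next
  case (Suc k)
  show ?case
  proof (cases "k = 0")
    case True then show ?thesis by simp
  next
    case False
    then have k: "1 \<le> k" "Suc k \<le> L" using Suc.prems by auto
    have "F2 (Wt t) (Suc k) - F2 (Wt t) 1 = (F2 (Wt t) (Suc k) - F2 (Wt t) k) + (F2 (Wt t) k - F2 (Wt t) 1)" by simp
    also have "F2 (Wt t) (Suc k) - F2 (Wt t) k = F2 (Wt 0) (Suc k) - F2 (Wt 0) k"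
      unfolding F2_NN using NN_const[OF k(1,2) _ _ Suc.prems(2)] by simp
    also have "F2 (Wt t) k - F2 (Wt t) 1 = F2 (Wt 0) k - F2 (Wt 0) 1" using Suc.IH k Suc.prems by simp
    finally show ?thesis by simp
  qed
qed

lemma Fr_inf: "j \<in> {1..L} \<Longrightarrow> filterlim (Fr j) at_top at_top"
proof -
  assume j: "j \<in> {1..L}"
  define C where "C = (\<Sum>k\<in>{1..L}. sqrt \<bar>F2 (Wt 0) k - F2 (Wt 0) j\<bar>)"
  have C0: "C \<ge> 0" unfolding C_def by (auto intro: sum_nonneg)
  have le: "Fr k t \<le> Fr j t + C" if k: "k \<in> {1..L}" and t: "t \<ge> 0" for k t
  proof -
    have "F2 (Wt t) k = F2 (Wt t) j + (F2 (Wt 0) k - F2 (Wt 0) j)"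
      using F2_diff_const[OF k t] F2_diff_const[OF j t] by simp
    also have "\<dots> \<le> F2 (Wt t) j + \<bar>F2 (Wt 0) k - F2 (Wt 0) j\<bar>" by simp
    finally have "Fr k t \<le> sqrt (F2 (Wt t) j + \<bar>F2 (Wt 0) k - F2 (Wt 0) j\<bar>)" unfolding Fr_def by simp
    also have "\<dots> \<le> Fr j t + sqrt \<bar>F2 (Wt 0) k - F2 (Wt 0) j\<bar>"
      unfolding Fr_def by (rule sqrt_add_le_add_sqrt) (auto simp: F2_def intro!: sum_nonneg)
    also have "sqrt \<bar>F2 (Wt 0) k - F2 (Wt 0) j\<bar> \<le> C" unfolding C_def
      by (rule member_le_sum[where f="\<lambda>k. sqrt \<bar>F2 (Wt 0) k - F2 (Wt 0) j\<bar>"]) (use k in auto)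
    finally show ?thesis by simp
  qed
  have prodle: "pn (Wt t) \<le> sqrt (real (dims 0)) * (Fr j t + C) ^ L" if t: "t \<ge> 0" for t
  proof -
    have "pn (Wt t) \<le> sqrt (real (dims 0)) * (\<Prod>k\<in>{1..L}. Fr k t)" using pn_le unfolding Fr_def by simp
    also have "(\<Prod>k\<in>{1..L}. Fr k t) \<le> (\<Prod>k\<in>{1..L}. Fr j t + C)"
      by (intro prod_mono) (use le t Fr_nonneg in auto)
    also have "\<dots> = (Fr j t + C) ^ L" by simp
    finally show ?thesis by (simp add: mult_left_mono)
  qed
  show ?thesis unfolding filterlim_at_top
  proof
    fix B :: real
    define B' where "B' = max B 0"
    have "\<forall>\<^sub>F t in at_top. sqrt (real (dims 0)) * (B' + C) ^ L < pn (Wt t)"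
      using pn_inf unfolding filterlim_at_top_dense by blast
    moreover have "\<forall>\<^sub>F t in at_top. t \<ge> (0::real)" by (rule eventually_ge_at_top)
    ultimately show "\<forall>\<^sub>F t in at_top. B \<le> Fr j t"
    proof eventually_elim
      case (elim t)
      then have "sqrt (real (dims 0)) * (B' + C) ^ L < sqrt (real (dims 0)) * (Fr j t + C) ^ L"
        using prodle[of t] by simp
      then have "(B' + C) ^ L < (Fr j t + C) ^ L" using dims0_pos by (simp add: mult_less_cancel_left)
      then have "B' + C < Fr j t + C" by (rule power_less_imp_less_base) (use Fr_nonneg C0 in \<open>auto intro: add_nonneg_nonneg\<close>)
      then show ?case unfolding B'_def by simp
    qed
  qed
qed

end



lemma vnorm_sq: "(vnorm m v)\<^sup>2 = (\<Sum>i<m. (v i)\<^sup>2)"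
  unfolding vnorm_def by (simp add: sum_nonneg)

lemma vnorm_nonneg: "vnorm m v \<ge> 0"
  unfolding vnorm_def by (simp add: sum_nonneg)

lemma vinner_le: "vinner m u v \<le> vnorm m u * vnorm m v"
  unfolding vinner_def vnorm_def by (rule CS1)

lemma vinner_abs_le: "\<bar>vinner m u v\<bar> \<le> vnorm m u * vnorm m v"
proof -
  have "- vinner m u v = vinner m (\<lambda>i. - u i) v" by (simp add: vinner_def sum_negf)
  also have "\<dots> \<le> vnorm m (\<lambda>i. - u i) * vnorm m v" by (rule vinner_le)
  also have "vnorm m (\<lambda>i. - u i) = vnorm m u" by (simp add: vnorm_def)
  finally show ?thesis using vinner_le[of m u v] by linarith
qed

lemma vinner_sum_c: "(\<Sum>j<m. q j * (v j * c)) = c * vinner m v q"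
  by (simp add: vinner_def sum_distrib_left algebra_simps)

context setting begin

lemma mv_bound: "(vnorm (dims k) (layer_mv dims W k v))\<^sup>2 \<le> F2 W k * (vnorm (dims (k - 1)) v)\<^sup>2"
proof -
  have "(vnorm (dims k) (layer_mv dims W k v))\<^sup>2 = (\<Sum>i<dims k. (\<Sum>j<dims (k - 1). W k i j * v j)\<^sup>2)"
    by (simp add: vnorm_sq layer_mv_def)
  also have "\<dots> \<le> (\<Sum>i<dims k. (\<Sum>j<dims (k - 1). (W k i j)\<^sup>2) * (\<Sum>j<dims (k - 1). (v j)\<^sup>2))"
    by (intro sum_mono Cauchy_Schwarz_ineq_sum)
  also have "\<dots> = F2 W k * (vnorm (dims (k - 1)) v)\<^sup>2"
    by (simp add: F2_def vnorm_sq sum_distrib_right)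
  finally show ?thesis .
qed

lemma F2_nonneg: "F2 W k \<ge> 0" by (auto simp: F2_def intro!: sum_nonneg)

lemma mv_bound': "vnorm (dims (k - 1)) v \<le> 1 \<Longrightarrow> vnorm (dims k) (layer_mv dims W k v) \<le> sqrt (F2 W k)"
proof -
  assume v: "vnorm (dims (k - 1)) v \<le> 1"
  have "(vnorm (dims (k - 1)) v)\<^sup>2 \<le> 1" using v vnorm_nonneg[of "dims (k - 1)" v] by (simp add: power_le_one)
  then have "F2 W k * (vnorm (dims (k - 1)) v)\<^sup>2 \<le> F2 W k * 1" using F2_nonneg by (intro mult_left_mono) auto
  then have "(vnorm (dims k) (layer_mv dims W k v))\<^sup>2 \<le> F2 W k * 1"
    using mv_bound[of k W v] by linarith
  then show ?thesis using vnorm_nonneg real_le_rsqrt by simp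
qed

definition SS :: "net \<Rightarrow> nat \<Rightarrow> real set" where
  "SS W k = {vnorm (dims k) (layer_mv dims W k v) | v. vnorm (dims (k - 1)) v \<le> 1}"

lemma spec_def': "specnorm dims W k = Sup (SS W k)" by (simp add: specnorm_def SS_def)

lemma SS_bdd: "bdd_above (SS W k)"
  unfolding SS_def by (rule bdd_aboveI[of _ "sqrt (F2 W k)"]) (auto intro: mv_bound')

lemma SS_ne: "SS W k \<noteq> {}"
proof -
  have "vnorm (dims (k - 1)) (\<lambda>_. 0) \<le> 1" by (simp add: vnorm_def)
  then show ?thesis unfolding SS_def by blast
qed

lemma spec_upper: "vnorm (dims (k - 1)) v \<le> 1 \<Longrightarrow> vnorm (dims k) (layer_mv dims W k v) \<le> specnorm dims W k"
  unfolding spec_def' by (rule cSup_upper[OF _ SS_bdd]) (auto simp: SS_def)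

lemma spec_le_F: "specnorm dims W k \<le> sqrt (F2 W k)"
  unfolding spec_def' by (rule cSup_least[OF SS_ne]) (auto simp: SS_def intro: mv_bound')

lemma spec_nonneg: "specnorm dims W k \<ge> 0"
proof -
  have "vnorm (dims (k - 1)) (\<lambda>_. 0) \<le> 1" by (simp add: vnorm_def)
  from spec_upper[OF this, of W] show ?thesis using vnorm_nonneg[of "dims k" "layer_mv dims W k (\<lambda>_. 0)"] by linarith
qed

lemma mv_scale: "layer_mv dims W k (\<lambda>j. a * v j) = (\<lambda>i. a * layer_mv dims W k v i)"
  by (auto simp: layer_mv_def sum_distrib_left algebra_simps)

lemma vnorm_scale: "vnorm m (\<lambda>i. a * v i) = \<bar>a\<bar> * vnorm m v"
  by (simp add: vnorm_def power_mult_distrib sum_distrib_left[symmetric] real_sqrt_mult)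

lemma mv_spec: "vnorm (dims k) (layer_mv dims W k v) \<le> specnorm dims W k * vnorm (dims (k - 1)) v"
proof (cases "vnorm (dims (k - 1)) v = 0")
  case True
  then have "\<forall>j<dims (k - 1). v j = 0" unfolding vnorm_def
    by (simp add: sum_nonneg_eq_0_iff)
  then have "layer_mv dims W k v = (\<lambda>i. 0)" by (auto simp: layer_mv_def)
  then show ?thesis using True by (simp add: vnorm_def)
next
  case False
  define a where "a = vnorm (dims (k - 1)) v"
  have a: "a > 0" using False vnorm_nonneg unfolding a_def by (metis less_eq_real_def)
  have "vnorm (dims (k - 1)) (\<lambda>j. (1 / a) * v j) = 1" using vnorm_scale[of "dims (k - 1)" "1 / a" v] a unfolding a_def by simp
  then have "vnorm (dims k) (layer_mv dims W k (\<lambda>j. (1 / a) * v j)) \<le> specnorm dims W k" by (intro spec_upper) simp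
  then have "\<bar>1 / a\<bar> * vnorm (dims k) (layer_mv dims W k v) \<le> specnorm dims W k"
    by (simp only: mv_scale vnorm_scale)
  then have "(1 / a) * vnorm (dims k) (layer_mv dims W k v) \<le> specnorm dims W k"
    using a by simp
  then have "vnorm (dims k) (layer_mv dims W k v) \<le> specnorm dims W k * a" using a by (simp add: field_simps mult.commute)
  then show ?thesis unfolding a_def .
qed

lemma adjoint: "vinner (dims (k - 1)) yy (layer_tmv dims W k q) = vinner (dims k) q (layer_mv dims W k yy)"
proof -
  have "vinner (dims (k - 1)) yy (layer_tmv dims W k q) = (\<Sum>j<dims (k - 1). \<Sum>i<dims k. yy j * W k i j * q i)"
    by (simp add: vinner_def layer_tmv_def sum_distrib_left mult.assoc)
  also have "\<dots> = (\<Sum>i<dims k. \<Sum>j<dims (k - 1). yy j * W k i j * q i)" by (rule sum.swap)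
  also have "\<dots> = vinner (dims k) q (layer_mv dims W k yy)"
    by (simp add: vinner_def layer_mv_def sum_distrib_left mult.assoc mult.commute mult.left_commute)
  finally show ?thesis .
qed

lemma tmv_spec:
  assumes q: "vnorm (dims k) q = 1"
  shows "vnorm (dims (k - 1)) (layer_tmv dims W k q) \<le> specnorm dims W k"
proof -
  define yv where "yv = layer_tmv dims W k q"
  have "(vnorm (dims (k - 1)) yv)\<^sup>2 = vinner (dims k) q (layer_mv dims W k yv)"
  proof -
    have "(vnorm (dims (k - 1)) yv)\<^sup>2 = vinner (dims (k - 1)) yv yv" unfolding vnorm_sq vinner_def by (simp add: power2_eq_square)
    also have "\<dots> = vinner (dims (k - 1)) yv (layer_tmv dims W k q)" by (simp add: yv_def)
    also have "\<dots> = vinner (dims k) q (layer_mv dims W k yv)" by (rule adjoint)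
    finally show ?thesis .
  qed
  also have "\<dots> \<le> vnorm (dims k) q * vnorm (dims k) (layer_mv dims W k yv)" by (rule vinner_le)
  also have "\<dots> \<le> 1 * (specnorm dims W k * vnorm (dims (k - 1)) yv)" using q mv_spec by simp
  finally have "(vnorm (dims (k - 1)) yv)\<^sup>2 \<le> specnorm dims W k * vnorm (dims (k - 1)) yv" by simp
  then have "vnorm (dims (k - 1)) yv * vnorm (dims (k - 1)) yv \<le> specnorm dims W k * vnorm (dims (k - 1)) yv"
    by (simp add: power2_eq_square)
  then show ?thesis unfolding yv_def[symmetric] using vnorm_nonneg[of "dims (k - 1)" yv] spec_nonneg[of W k]
    by (cases "vnorm (dims (k - 1)) yv = 0") (auto intro: mult_right_le_imp_le)
qed


lemma tsp_facts:
  assumes "top_sing_pair dims W k u v"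
  shows "(\<Sum>i<dims k. (u i)\<^sup>2) = 1" "(\<Sum>j<dims (k - 1). (v j)\<^sup>2) = 1"
    "\<And>i. i < dims k \<Longrightarrow> layer_mv dims W k v i = specnorm dims W k * u i"
    "\<And>j. j < dims (k - 1) \<Longrightarrow> layer_tmv dims W k u j = specnorm dims W k * v j"
  using assms unfolding top_sing_pair_def by (auto simp: vnorm_def sum_nonneg)

lemma tsp_sigma:
  assumes tsp: "top_sing_pair dims W k u v"
  shows "(\<Sum>i<dims k. \<Sum>j<dims (k - 1). W k i j * u i * v j) = specnorm dims W k"
proof -
  have "(\<Sum>i<dims k. \<Sum>j<dims (k - 1). W k i j * u i * v j) = (\<Sum>i<dims k. u i * layer_mv dims W k v i)"
    by (simp add: layer_mv_def sum_distrib_left mult.commute mult.left_commute)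
  also have "\<dots> = (\<Sum>i<dims k. specnorm dims W k * (u i)\<^sup>2)"
    using tsp_facts(3)[OF tsp] by (intro sum.cong refl) (simp add: power2_eq_square)
  also have "\<dots> = specnorm dims W k" using tsp_facts(1)[OF tsp] by (simp add: sum_distrib_left[symmetric])
  finally show ?thesis .
qed

lemma tsp_E:
  assumes tsp: "top_sing_pair dims W k u v"
  shows "(\<Sum>i<dims k. \<Sum>j<dims (k - 1). (W k i j - specnorm dims W k * u i * v j)\<^sup>2) = F2 W k - (specnorm dims W k)\<^sup>2"
proof -
  let ?s = "specnorm dims W k"
  have P: "(\<Sum>i<dims k. \<Sum>j<dims (k - 1). (u i)\<^sup>2 * (v j)\<^sup>2) = 1"
    using tsp_facts(1,2)[OF tsp] by (simp add: sum_product[symmetric])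
  have "(\<Sum>i<dims k. \<Sum>j<dims (k - 1). (W k i j - ?s * u i * v j)\<^sup>2)
     = (\<Sum>i<dims k. \<Sum>j<dims (k - 1). (W k i j)\<^sup>2) - 2 * ?s * (\<Sum>i<dims k. \<Sum>j<dims (k - 1). W k i j * u i * v j)
       + ?s\<^sup>2 * (\<Sum>i<dims k. \<Sum>j<dims (k - 1). (u i)\<^sup>2 * (v j)\<^sup>2)"
    by (simp add: power2_eq_square algebra_simps sum.distrib sum_subtractf sum_distrib_left)
  also have "\<dots> = F2 W k - ?s\<^sup>2"
    unfolding P tsp_sigma[OF tsp] by (simp add: F2_def power2_eq_square)
  finally show ?thesis .
qed

definition Ev :: "net \<Rightarrow> nat \<Rightarrow> (nat \<Rightarrow> real) \<Rightarrow> (nat \<Rightarrow> real) \<Rightarrow> (nat \<Rightarrow> real) \<Rightarrow> nat \<Rightarrow> real" where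
  "Ev W k u v q i = layer_mv dims W k q i - specnorm dims W k * u i * vinner (dims (k - 1)) v q"

lemma tsp_orth:
  assumes tsp: "top_sing_pair dims W k u v"
  shows "(\<Sum>i<dims k. u i * Ev W k u v q i) = 0"
proof -
  have "(\<Sum>i<dims k. u i * layer_mv dims W k q i) = vinner (dims k) u (layer_mv dims W k q)" by (simp add: vinner_def)
  also have "\<dots> = vinner (dims (k - 1)) q (layer_tmv dims W k u)" by (rule adjoint[symmetric])
  also have "\<dots> = specnorm dims W k * vinner (dims (k - 1)) v q"
    using tsp_facts(4)[OF tsp] by (simp add: vinner_def sum_distrib_left mult.commute mult.left_commute)
  finally have A: "(\<Sum>i<dims k. u i * layer_mv dims W k q i) = specnorm dims W k * vinner (dims (k - 1)) v q" .
  have "(\<Sum>i<dims k. u i * Ev W k u v q i) = (\<Sum>i<dims k. u i * layer_mv dims W k q i)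
      - specnorm dims W k * vinner (dims (k - 1)) v q * (\<Sum>i<dims k. (u i)\<^sup>2)"
    by (simp add: Ev_def algebra_simps sum_subtractf sum_distrib_left power2_eq_square)
  then show ?thesis using A tsp_facts(1)[OF tsp] by simp
qed

lemma tsp_decomp:
  assumes tsp: "top_sing_pair dims W k u v"
  shows "(vnorm (dims k) (layer_mv dims W k q))\<^sup>2 = (specnorm dims W k)\<^sup>2 * (vinner (dims (k - 1)) v q)\<^sup>2 + (\<Sum>i<dims k. (Ev W k u v q i)\<^sup>2)"
proof -
  let ?s = "specnorm dims W k" and ?a = "vinner (dims (k - 1)) v q"
  have "(vnorm (dims k) (layer_mv dims W k q))\<^sup>2 = (\<Sum>i<dims k. (Ev W k u v q i + ?s * ?a * u i)\<^sup>2)"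
    by (simp add: vnorm_sq Ev_def algebra_simps)
  also have "\<dots> = (\<Sum>i<dims k. (Ev W k u v q i)\<^sup>2) + 2 * ?s * ?a * (\<Sum>i<dims k. u i * Ev W k u v q i) + ?s\<^sup>2 * ?a\<^sup>2 * (\<Sum>i<dims k. (u i)\<^sup>2)"
    by (simp add: power2_eq_square algebra_simps sum.distrib sum_distrib_left)
  also have "\<dots> = ?s\<^sup>2 * ?a\<^sup>2 + (\<Sum>i<dims k. (Ev W k u v q i)\<^sup>2)"
    unfolding tsp_orth[OF tsp] tsp_facts(1)[OF tsp] by simp
  finally show ?thesis .
qed

lemma tsp_Ebound:
  assumes tsp: "top_sing_pair dims W k u v"
  shows "(\<Sum>i<dims k. (Ev W k u v q i)\<^sup>2) \<le> (F2 W k - (specnorm dims W k)\<^sup>2) * ((vnorm (dims (k - 1)) q)\<^sup>2 - (vinner (dims (k - 1)) v q)\<^sup>2)"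
proof -
  let ?s = "specnorm dims W k" and ?a = "vinner (dims (k - 1)) v q"
  define E where "E i j = W k i j - ?s * u i * v j" for i j
  define z where "z j = q j - ?a * v j" for j
  have Ez: "Ev W k u v q i = (\<Sum>j<dims (k - 1). E i j * z j)" if i: "i < dims k" for i
  proof -
    have vq: "(\<Sum>j<dims (k - 1). v j * q j) = ?a" by (simp add: vinner_def)
    have "(\<Sum>j<dims (k - 1). E i j * z j) = (\<Sum>j<dims (k - 1). W k i j * q j) - ?a * (\<Sum>j<dims (k - 1). W k i j * v j)
        - ?s * u i * (\<Sum>j<dims (k - 1). v j * q j) + ?s * u i * ?a * (\<Sum>j<dims (k - 1). (v j)\<^sup>2)"
      unfolding E_def z_def
      by (simp add: algebra_simps sum_subtractf sum.distrib sum_distrib_left power2_eq_square)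
    also have "\<dots> = Ev W k u v q i" using tsp_facts(2,3)[OF tsp] i
      unfolding vq by (simp add: Ev_def layer_mv_def)
    finally show ?thesis by simp
  qed
  have "(\<Sum>i<dims k. (Ev W k u v q i)\<^sup>2) \<le> (\<Sum>i<dims k. (\<Sum>j<dims (k - 1). (E i j)\<^sup>2) * (\<Sum>j<dims (k - 1). (z j)\<^sup>2))"
    using Ez by (intro sum_mono) (simp add: Cauchy_Schwarz_ineq_sum)
  also have "\<dots> = (\<Sum>i<dims k. \<Sum>j<dims (k - 1). (E i j)\<^sup>2) * (\<Sum>j<dims (k - 1). (z j)\<^sup>2)"
    by (simp only: sum_distrib_right)
  also have "\<dots> = (F2 W k - ?s\<^sup>2) * (\<Sum>j<dims (k - 1). (z j)\<^sup>2)"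
    using tsp_E[OF tsp] unfolding E_def by simp
  also have "(\<Sum>j<dims (k - 1). (z j)\<^sup>2) = (vnorm (dims (k - 1)) q)\<^sup>2 - ?a\<^sup>2"
  proof -
    have "(\<Sum>j<dims (k - 1). (z j)\<^sup>2) = (\<Sum>j<dims (k - 1). (q j)\<^sup>2) - 2 * ?a * ?a + ?a\<^sup>2 * (\<Sum>j<dims (k - 1). (v j)\<^sup>2)"
    proof -
      show ?thesis unfolding z_def
        by (simp add: power2_eq_square algebra_simps sum.distrib sum_subtractf sum_distrib_left vinner_sum_c)
    qed
    then show ?thesis using tsp_facts(2)[OF tsp] unfolding vnorm_sq by (simp add: power2_eq_square)
  qed
  finally show ?thesis .
qed


lemma NN_quad:
  "(\<Sum>b<dims k. \<Sum>c<dims k. q b * q c * NN W k b c)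
   = (vnorm (dims (Suc k)) (layer_mv dims W (Suc k) q))\<^sup>2 - (vnorm (dims (k - 1)) (layer_tmv dims W k q))\<^sup>2"
proof -
  have A: "(\<Sum>b<dims k. \<Sum>c<dims k. q b * q c * (\<Sum>a<dims (Suc k). W (Suc k) a b * W (Suc k) a c))
     = (vnorm (dims (Suc k)) (layer_mv dims W (Suc k) q))\<^sup>2"
  proof -
    have "(\<Sum>b<dims k. \<Sum>c<dims k. q b * q c * (\<Sum>a<dims (Suc k). W (Suc k) a b * W (Suc k) a c))
       = (\<Sum>b<dims k. \<Sum>c<dims k. \<Sum>a<dims (Suc k). (W (Suc k) a b * q b) * (W (Suc k) a c * q c))"
      by (simp add: sum_distrib_left mult_ac)
    also have "\<dots> = (\<Sum>a<dims (Suc k). \<Sum>b<dims k. \<Sum>c<dims k. (W (Suc k) a b * q b) * (W (Suc k) a c * q c))"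
      by (simp add: sum.swap[of _ "{..<dims (Suc k)}"])
    also have "\<dots> = (\<Sum>a<dims (Suc k). (\<Sum>b<dims k. W (Suc k) a b * q b) * (\<Sum>c<dims k. W (Suc k) a c * q c))"
      by (simp add: sum_product)
    also have "\<dots> = (vnorm (dims (Suc k)) (layer_mv dims W (Suc k) q))\<^sup>2"
      unfolding vnorm_sq layer_mv_def by (simp add: power2_eq_square)
    finally show ?thesis .
  qed
  have B: "(\<Sum>b<dims k. \<Sum>c<dims k. q b * q c * (\<Sum>e<dims (k - 1). W k b e * W k c e))
     = (vnorm (dims (k - 1)) (layer_tmv dims W k q))\<^sup>2"
  proof -
    have "(\<Sum>b<dims k. \<Sum>c<dims k. q b * q c * (\<Sum>e<dims (k - 1). W k b e * W k c e))
       = (\<Sum>b<dims k. \<Sum>c<dims k. \<Sum>e<dims (k - 1). (W k b e * q b) * (W k c e * q c))"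
      by (simp add: sum_distrib_left mult_ac)
    also have "\<dots> = (\<Sum>b<dims k. \<Sum>e<dims (k - 1). \<Sum>c<dims k. (W k b e * q b) * (W k c e * q c))"
      by (rule sum.cong[OF refl], rule sum.swap)
    also have "\<dots> = (\<Sum>e<dims (k - 1). \<Sum>b<dims k. \<Sum>c<dims k. (W k b e * q b) * (W k c e * q c))"
      by (rule sum.swap)
    also have "\<dots> = (\<Sum>e<dims (k - 1). (\<Sum>b<dims k. W k b e * q b) * (\<Sum>c<dims k. W k c e * q c))"
      by (simp add: sum_product)
    also have "\<dots> = (vnorm (dims (k - 1)) (layer_tmv dims W k q))\<^sup>2"
      unfolding vnorm_sq layer_tmv_def by (simp add: power2_eq_square)
    finally show ?thesis .
  qed
  show ?thesis unfolding NN_def A[symmetric] B[symmetric]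
    by (simp add: right_diff_distrib sum_subtractf)
qed

lemma NN_quad_bound:
  "\<bar>\<Sum>b<dims k. \<Sum>c<dims k. q b * q c * NN W k b c\<bar>
    \<le> sqrt (\<Sum>b<dims k. \<Sum>c<dims k. (NN W k b c)\<^sup>2) * (vnorm (dims k) q)\<^sup>2"
proof -
  have sq: "sqrt (\<Sum>b<dims k. \<Sum>c<dims k. (q b * q c)\<^sup>2) = (vnorm (dims k) q)\<^sup>2"
  proof -
    have "(\<Sum>b<dims k. \<Sum>c<dims k. (q b * q c)\<^sup>2) = ((vnorm (dims k) q)\<^sup>2)\<^sup>2"
      by (simp add: vnorm_sq power_mult_distrib sum_product power2_eq_square[of "sum _ _"])
    then show ?thesis using real_sqrt_abs[of "(vnorm (dims k) q)\<^sup>2"] by simp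
  qed
  have "(\<Sum>b<dims k. \<Sum>c<dims k. q b * q c * NN W k b c) \<le> sqrt (\<Sum>b<dims k. \<Sum>c<dims k. (q b * q c)\<^sup>2) * sqrt (\<Sum>b<dims k. \<Sum>c<dims k. (NN W k b c)\<^sup>2)"
    by (rule CS2)
  moreover have "- (\<Sum>b<dims k. \<Sum>c<dims k. q b * q c * NN W k b c) \<le> sqrt (\<Sum>b<dims k. \<Sum>c<dims k. (q b * q c)\<^sup>2) * sqrt (\<Sum>b<dims k. \<Sum>c<dims k. (- NN W k b c)\<^sup>2)"
    using CS2[where a="\<lambda>b c. q b * q c" and b="\<lambda>b c. - NN W k b c"] by (simp add: sum_negf)
  ultimately show ?thesis unfolding sq by (simp add: abs_le_iff mult.commute)
qed

end



locale full2 = full +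
  fixes u v :: "real \<Rightarrow> nat \<Rightarrow> nat \<Rightarrow> real"
  assumes singvecs: "\<forall>t\<ge>0. \<forall>k\<in>{1..L}. top_sing_pair dims (Wt t) k (u t k) (v t k)"
begin

abbreviation "sig k t \<equiv> specnorm dims (Wt t) k"

definition dl :: "nat \<Rightarrow> real" where
  "dl k = sqrt (\<Sum>b<dims k. \<Sum>c<dims k. (NN (Wt 0) k b c)\<^sup>2)"

lemma tsp: "t \<ge> 0 \<Longrightarrow> k \<in> {1..L} \<Longrightarrow> top_sing_pair dims (Wt t) k (u t k) (v t k)"
  using singvecs by blast

lemma quad_bound:
  assumes k: "1 \<le> k" "Suc k \<le> L" and t: "t \<ge> 0" and q: "vnorm (dims k) q = 1"
  shows "\<bar>(vnorm (dims (Suc k)) (layer_mv dims (Wt t) (Suc k) q))\<^sup>2 - (vnorm (dims (k - 1)) (layer_tmv dims (Wt t) k q))\<^sup>2\<bar> \<le> dl k"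
proof -
  have "(\<Sum>b<dims k. \<Sum>c<dims k. (NN (Wt t) k b c)\<^sup>2) = (\<Sum>b<dims k. \<Sum>c<dims k. (NN (Wt 0) k b c)\<^sup>2)"
    using NN_const[OF k _ _ t] by (intro sum.cong refl) auto
  then show ?thesis using NN_quad_bound[where k=k and q=q and W="Wt t"] q unfolding NN_quad dl_def by simp
qed

lemma sig_sq_norm: "t \<ge> 0 \<Longrightarrow> k \<in> {1..L} \<Longrightarrow> (vnorm (dims k) (layer_mv dims (Wt t) k (v t k)))\<^sup>2 = (sig k t)\<^sup>2"
proof -
  assume a: "t \<ge> 0" "k \<in> {1..L}"
  have "(vnorm (dims k) (layer_mv dims (Wt t) k (v t k)))\<^sup>2 = (\<Sum>i<dims k. (sig k t)\<^sup>2 * (u t k i)\<^sup>2)"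
    unfolding vnorm_sq using tsp_facts(3)[OF tsp[OF a]] by (intro sum.cong refl) (simp add: power_mult_distrib)
  also have "\<dots> = (sig k t)\<^sup>2" using tsp_facts(1)[OF tsp[OF a]] by (simp add: sum_distrib_left[symmetric])
  finally show ?thesis .
qed

lemma sig_tsq_norm: "t \<ge> 0 \<Longrightarrow> k \<in> {1..L} \<Longrightarrow> (vnorm (dims (k - 1)) (layer_tmv dims (Wt t) k (u t k)))\<^sup>2 = (sig k t)\<^sup>2"
proof -
  assume a: "t \<ge> 0" "k \<in> {1..L}"
  have "(vnorm (dims (k - 1)) (layer_tmv dims (Wt t) k (u t k)))\<^sup>2 = (\<Sum>j<dims (k - 1). (sig k t)\<^sup>2 * (v t k j)\<^sup>2)"
    unfolding vnorm_sq using tsp_facts(4)[OF tsp[OF a]] by (intro sum.cong refl) (simp add: power_mult_distrib)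
  also have "\<dots> = (sig k t)\<^sup>2" using tsp_facts(2)[OF tsp[OF a]] by (simp add: sum_distrib_left[symmetric])
  finally show ?thesis .
qed

lemma unit_u: "t \<ge> 0 \<Longrightarrow> k \<in> {1..L} \<Longrightarrow> vnorm (dims k) (u t k) = 1"
  using tsp unfolding top_sing_pair_def by blast
lemma unit_v: "t \<ge> 0 \<Longrightarrow> k \<in> {1..L} \<Longrightarrow> vnorm (dims (k - 1)) (v t k) = 1"
  using tsp unfolding top_sing_pair_def by blast

lemma sig_step:
  assumes k: "1 \<le> k" "Suc k \<le> L" and t: "t \<ge> 0"
  shows "(sig k t)\<^sup>2 \<ge> (sig (Suc k) t)\<^sup>2 - dl k"
proof -
  have k1: "Suc k \<in> {1..L}" "k \<in> {1..L}" using k by auto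
  have q: "vnorm (dims k) (v t (Suc k)) = 1" using unit_v[OF t k1(1)] by simp
  have A: "(vnorm (dims (Suc k)) (layer_mv dims (Wt t) (Suc k) (v t (Suc k))))\<^sup>2 = (sig (Suc k) t)\<^sup>2"
    using sig_sq_norm[OF t k1(1)] by simp
  have B: "vnorm (dims (k - 1)) (layer_tmv dims (Wt t) k (v t (Suc k))) \<le> sig k t"
    by (rule tmv_spec[OF q])
  have "(vnorm (dims (k - 1)) (layer_tmv dims (Wt t) k (v t (Suc k))))\<^sup>2 \<le> (sig k t)\<^sup>2"
    using B vnorm_nonneg by (intro power_mono) auto
  then show ?thesis using quad_bound[OF k t q] A by linarith
qed

definition ee :: "nat \<Rightarrow> real \<Rightarrow> real" where "ee k t = F2 (Wt t) k - (sig k t)\<^sup>2"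

lemma ee_nonneg: "ee k t \<ge> 0"
proof -
  have "sig k t \<le> sqrt (F2 (Wt t) k)" by (rule spec_le_F)
  then have "(sig k t)\<^sup>2 \<le> F2 (Wt t) k" using spec_nonneg F2_nonneg
    by (metis power_mono real_sqrt_pow2)
  then show ?thesis by (simp add: ee_def)
qed

lemma ee_L: "t \<ge> 0 \<Longrightarrow> ee L t = 0"
proof -
  assume t: "t \<ge> 0"
  have kL: "L \<in> {1..L}" using L2 by auto
  note T = tsp[OF t kL]
  let ?s = "sig L t"
  have u0: "(u t L 0)\<^sup>2 = 1" using tsp_facts(1)[OF T] dL by simp
  have E0: "Wt t L 0 j - ?s * u t L 0 * v t L j = 0" if j: "j < dims (L - 1)" for j
  proof -
    have "(Wt t L 0 j - ?s * u t L 0 * v t L j) * u t L 0 = layer_tmv dims (Wt t) L (u t L) j - ?s * v t L j * (u t L 0)\<^sup>2"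
      using dL by (simp add: layer_tmv_def algebra_simps power2_eq_square)
    also have "\<dots> = 0" using tsp_facts(4)[OF T j] u0 by simp
    finally show ?thesis using u0 by auto
  qed
  have "F2 (Wt t) L - ?s\<^sup>2 = (\<Sum>i<dims L. \<Sum>j<dims (L - 1). (Wt t L i j - ?s * u t L i * v t L j)\<^sup>2)"
    using tsp_E[OF T] by simp
  also have "\<dots> = 0" using dL E0 by simp
  finally show ?thesis by (simp add: ee_def)
qed

lemma ee_bound: "k \<in> {1..L} \<Longrightarrow> \<exists>C. \<forall>t\<ge>0. ee k t \<le> C"
proof (induction "L - k" arbitrary: k)
  case 0
  then have "k = L" by auto
  then show ?case using ee_L by auto
next
  case (Suc d)
  then have k: "1 \<le> k" "Suc k \<le> L" by auto
  have dd: "d = L - Suc k" using Suc.hyps(2) by arith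
  obtain C where C: "\<forall>t\<ge>0. ee (Suc k) t \<le> C" using Suc.hyps(1)[OF dd] k by auto
  have "ee k t \<le> C + dl k + \<bar>\<Sum>b<dims k. NN (Wt 0) k b b\<bar>" if t: "t \<ge> 0" for t
  proof -
    have tr: "F2 (Wt t) k = F2 (Wt t) (Suc k) - (\<Sum>b<dims k. NN (Wt 0) k b b)"
      using F2_NN[of "Wt t" k] NN_const[OF k _ _ t] by simp
    have c: "F2 (Wt t) (Suc k) - (sig (Suc k) t)\<^sup>2 \<le> C" using C t unfolding ee_def by simp
    show ?thesis using tr sig_step[OF k t] c abs_ge_minus_self[of "\<Sum>b<dims k. NN (Wt 0) k b b"] unfolding ee_def by linarith
  qed
  then show ?case by blast
qed


lemma frob_F2: "frob dims W k = sqrt (F2 W k)" by (simp add: frob_def F2_def)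

lemma align_formula:
  assumes T: "top_sing_pair dims W k uu vv" and F: "F2 W k > 0"
  shows "align_err dims W k uu vv = sqrt (2 - 2 * specnorm dims W k / sqrt (F2 W k))"
proof -
  let ?F = "sqrt (F2 W k)" and ?s = "specnorm dims W k"
  have F0: "?F > 0" using F by simp
  have P: "(\<Sum>i<dims k. \<Sum>j<dims (k - 1). (uu i)\<^sup>2 * (vv j)\<^sup>2) = 1"
    using tsp_facts(1,2)[OF T] by (simp add: sum_product[symmetric])
  have "(\<Sum>i<dims k. \<Sum>j<dims (k - 1). (W k i j / ?F - uu i * vv j)\<^sup>2)
     = (\<Sum>i<dims k. \<Sum>j<dims (k - 1). (W k i j)\<^sup>2) / ?F\<^sup>2 - 2 / ?F * (\<Sum>i<dims k. \<Sum>j<dims (k - 1). W k i j * uu i * vv j)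
       + (\<Sum>i<dims k. \<Sum>j<dims (k - 1). (uu i)\<^sup>2 * (vv j)\<^sup>2)"
    by (simp add: power2_eq_square algebra_simps sum.distrib sum_subtractf sum_distrib_left sum_divide_distrib)
  also have "\<dots> = 2 - 2 * ?s / ?F"
    unfolding P tsp_sigma[OF T] using F by (simp add: F2_def)
  finally show ?thesis unfolding align_err_def frob_F2 by simp
qed

lemma Fr2_inf: "k \<in> {1..L} \<Longrightarrow> filterlim (\<lambda>t. (Fr k t)\<^sup>2) at_top at_top"
proof -
  assume k: "k \<in> {1..L}"
  show ?thesis
  proof (rule filterlim_at_top_mono[OF Fr_inf[OF k]])
    show "\<forall>\<^sub>F t in at_top. Fr k t \<le> (Fr k t)\<^sup>2"
      using Fr_inf[OF k] unfolding filterlim_at_top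
      by (auto elim!: allE[of _ 1] elim: eventually_mono simp: power2_eq_square intro: order_trans[OF _ mult_right_mono[of 1]])
  qed
qed

lemma inv_Fr2: "k \<in> {1..L} \<Longrightarrow> ((\<lambda>t. C / (Fr k t)\<^sup>2) \<longlongrightarrow> 0) at_top"
  by (rule tendsto_divide_0[OF tendsto_const filterlim_at_top_imp_at_infinity[OF Fr2_inf]])

lemma ev_pos: "k \<in> {1..L} \<Longrightarrow> \<forall>\<^sub>F t in at_top. t \<ge> 0 \<and> Fr k t > 0"
proof -
  assume k: "k \<in> {1..L}"
  have "\<forall>\<^sub>F t in at_top. Fr k t > 0" using Fr_inf[OF k] unfolding filterlim_at_top_dense by blast
  then show ?thesis using eventually_ge_at_top[of "0::real"] by eventually_elim auto
qed

lemma ratio_lim: "k \<in> {1..L} \<Longrightarrow> ((\<lambda>t. sig k t / Fr k t) \<longlongrightarrow> 1) at_top"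
proof -
  assume k: "k \<in> {1..L}"
  obtain C where C: "\<forall>t\<ge>0. ee k t \<le> C" using ee_bound[OF k] by blast
  show ?thesis
  proof (rule tendsto_sandwich[where f="\<lambda>t. 1 - C / (Fr k t)\<^sup>2" and h="\<lambda>t. 1"])
    show "((\<lambda>t. 1 - C / (Fr k t)\<^sup>2) \<longlongrightarrow> 1) at_top"
      using tendsto_diff[OF tendsto_const inv_Fr2[OF k], of 1 C] by simp
    show "\<forall>\<^sub>F t in at_top. sig k t / Fr k t \<le> 1"
      using ev_pos[OF k] by eventually_elim (use spec_le_F in \<open>auto simp: Fr_def\<close>)
    show "\<forall>\<^sub>F t in at_top. 1 - C / (Fr k t)\<^sup>2 \<le> sig k t / Fr k t"
      using ev_pos[OF k]
    proof eventually_elim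
      case (elim t)
      let ?F = "Fr k t" and ?s = "sig k t"
      have F2: "?F\<^sup>2 = F2 (Wt t) k" using F2_nonneg by (simp add: Fr_def)
      have le: "?s \<le> ?F" using spec_le_F by (simp add: Fr_def)
      have s0: "?s \<ge> 0" by (rule spec_nonneg)
      have r01: "0 \<le> ?s / ?F" "?s / ?F \<le> 1" using le s0 elim by auto
      have h: "?F\<^sup>2 - C \<le> ?s\<^sup>2" using C elim unfolding ee_def F2 by auto
      have Fp: "?F\<^sup>2 > 0" using elim by simp
      have "1 - C / ?F\<^sup>2 = (?F\<^sup>2 - C) / ?F\<^sup>2" using Fp by (simp add: field_simps)
      also have "\<dots> \<le> ?s\<^sup>2 / ?F\<^sup>2" using h Fp by (intro divide_right_mono) auto
      also have "\<dots> = (?s / ?F)\<^sup>2" by (simp add: power_divide)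
      also have "\<dots> \<le> ?s / ?F" using mult_right_le_one_le[OF r01(1) r01(1) r01(2)] by (simp only: power2_eq_square)
      finally show ?case .
    qed
  qed simp
qed

lemma align_lim: "k \<in> {1..L} \<Longrightarrow> ((\<lambda>t. align_err dims (Wt t) k (u t k) (v t k)) \<longlongrightarrow> 0) at_top"
proof -
  assume k: "k \<in> {1..L}"
  have "((\<lambda>t. sqrt (2 - 2 * (sig k t / Fr k t))) \<longlongrightarrow> sqrt (2 - 2 * 1)) at_top"
    by (intro tendsto_intros ratio_lim[OF k])
  then have L: "((\<lambda>t. sqrt (2 - 2 * (sig k t / Fr k t))) \<longlongrightarrow> 0) at_top" by simp
  show ?thesis
  proof (rule Lim_transform_eventually[OF L])
    show "\<forall>\<^sub>F t in at_top. sqrt (2 - 2 * (sig k t / Fr k t)) = align_err dims (Wt t) k (u t k) (v t k)"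
      using ev_pos[OF k] by eventually_elim (use k in \<open>auto simp: align_formula[OF tsp] Fr_def\<close>)
  qed
qed


lemma sig2_inf: "k \<in> {1..L} \<Longrightarrow> filterlim (\<lambda>t. (sig k t)\<^sup>2) at_top at_top"
proof -
  assume k: "k \<in> {1..L}"
  obtain C where C: "\<forall>t\<ge>0. ee k t \<le> C" using ee_bound[OF k] by blast
  have "filterlim (\<lambda>t. - C + (Fr k t)\<^sup>2) at_top at_top"
    by (rule filterlim_tendsto_add_at_top[OF tendsto_const Fr2_inf[OF k]])
  then show ?thesis
  proof (rule filterlim_at_top_mono)
    show "\<forall>\<^sub>F t in at_top. - C + (Fr k t)\<^sup>2 \<le> (sig k t)\<^sup>2"
      using eventually_ge_at_top[of "0::real"]
      by eventually_elim (use C F2_nonneg in \<open>auto simp: ee_def Fr_def\<close>)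
  qed
qed

lemma layer_align:
  assumes k: "1 \<le> k" "Suc k \<le> L"
  shows "((\<lambda>t. \<bar>vinner (dims k) (v t (Suc k)) (u t k)\<bar>) \<longlongrightarrow> 1) at_top"
proof -
  have k1: "Suc k \<in> {1..L}" "k \<in> {1..L}" using k by auto
  obtain C where C: "\<forall>t\<ge>0. ee (Suc k) t \<le> C" using ee_bound[OF k1(1)] by blast
  have C0: "C \<ge> 0" using C ee_nonneg[of "Suc k" 0] by auto
  define D where "D = 2 * dl k + C"
  have main: "(sig (Suc k) t)\<^sup>2 * (1 - \<bar>vinner (dims k) (v t (Suc k)) (u t k)\<bar>) \<le> D
      \<and> \<bar>vinner (dims k) (v t (Suc k)) (u t k)\<bar> \<le> 1" if t: "t \<ge> 0" for t
  proof -
    let ?c = "vinner (dims k) (v t (Suc k)) (u t k)" and ?s' = "sig (Suc k) t" and ?q = "u t k"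
    have q: "vnorm (dims k) ?q = 1" using unit_u[OF t k1(2)] .
    have c1: "\<bar>?c\<bar> \<le> 1" using vinner_abs_le[of "dims k" "v t (Suc k)" ?q] q unit_v[OF t k1(1)] by simp
    then have "\<bar>?c\<bar> * \<bar>?c\<bar> \<le> 1" by (intro mult_le_one) auto
    then have c2: "?c\<^sup>2 \<le> 1" by (simp add: power2_eq_square)
    have A: "(vnorm (dims (Suc k)) (layer_mv dims (Wt t) (Suc k) ?q))\<^sup>2 \<ge> (sig k t)\<^sup>2 - dl k"
      using quad_bound[OF k t q] sig_tsq_norm[OF t k1(2)] by linarith
    have B: "(vnorm (dims (Suc k)) (layer_mv dims (Wt t) (Suc k) ?q))\<^sup>2 \<le> ?s'\<^sup>2 * ?c\<^sup>2 + C * (1 - ?c\<^sup>2)"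
    proof -
      have b1: "(vnorm (dims (Suc k)) (layer_mv dims (Wt t) (Suc k) ?q))\<^sup>2 = ?s'\<^sup>2 * ?c\<^sup>2 + (\<Sum>i<dims (Suc k). (Ev (Wt t) (Suc k) (u t (Suc k)) (v t (Suc k)) ?q i)\<^sup>2)"
        using tsp_decomp[OF tsp[OF t k1(1)], of ?q] by simp
      have b2: "(\<Sum>i<dims (Suc k). (Ev (Wt t) (Suc k) (u t (Suc k)) (v t (Suc k)) ?q i)\<^sup>2) \<le> ee (Suc k) t * (1 - ?c\<^sup>2)"
        using tsp_Ebound[OF tsp[OF t k1(1)], of ?q] q by (simp add: ee_def)
      have b3: "ee (Suc k) t * (1 - ?c\<^sup>2) \<le> C * (1 - ?c\<^sup>2)" using C t c2 by (intro mult_right_mono) auto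
      show ?thesis using b1 b2 b3 by linarith
    qed
    have e1: "C * (1 - ?c\<^sup>2) \<le> C" using C0 by (simp add: right_diff_distrib)
    have e2: "?s'\<^sup>2 * (1 - ?c\<^sup>2) = ?s'\<^sup>2 - ?s'\<^sup>2 * ?c\<^sup>2" by (simp add: right_diff_distrib)
    have "?s'\<^sup>2 * (1 - ?c\<^sup>2) \<le> D" using A B sig_step[OF k t] e1 e2 unfolding D_def by linarith
    moreover have "1 - \<bar>?c\<bar> \<le> 1 - ?c\<^sup>2"
    proof -
      have "\<bar>?c\<bar> * \<bar>?c\<bar> \<le> \<bar>?c\<bar>" using c1 by (intro mult_right_le_one_le) auto
      then have "?c\<^sup>2 \<le> \<bar>?c\<bar>" by (simp add: power2_eq_square)
      then show ?thesis by simp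
    qed
    then have "?s'\<^sup>2 * (1 - \<bar>?c\<bar>) \<le> ?s'\<^sup>2 * (1 - ?c\<^sup>2)" by (intro mult_left_mono) auto
    ultimately have "?s'\<^sup>2 * (1 - \<bar>?c\<bar>) \<le> D" by linarith
    then show ?thesis using c1 by simp
  qed
  show ?thesis
  proof (rule tendsto_sandwich[where f="\<lambda>t. 1 - D / (sig (Suc k) t)\<^sup>2" and h="\<lambda>t. 1"])
    have "((\<lambda>t. D / (sig (Suc k) t)\<^sup>2) \<longlongrightarrow> 0) at_top"
      by (rule tendsto_divide_0[OF tendsto_const filterlim_at_top_imp_at_infinity[OF sig2_inf[OF k1(1)]]])
    then show "((\<lambda>t. 1 - D / (sig (Suc k) t)\<^sup>2) \<longlongrightarrow> 1) at_top"
      using tendsto_diff[OF tendsto_const, of _ 0 at_top 1] by simp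
    show "\<forall>\<^sub>F t in at_top. \<bar>vinner (dims k) (v t (Suc k)) (u t k)\<bar> \<le> 1"
      using eventually_ge_at_top[of "0::real"] by eventually_elim (use main in auto)
    have "\<forall>\<^sub>F t in at_top. (sig (Suc k) t)\<^sup>2 > 0"
      using sig2_inf[OF k1(1)] unfolding filterlim_at_top_dense by blast
    then show "\<forall>\<^sub>F t in at_top. 1 - D / (sig (Suc k) t)\<^sup>2 \<le> \<bar>vinner (dims k) (v t (Suc k)) (u t k)\<bar>"
      using eventually_ge_at_top[of "0::real"]
    proof eventually_elim
      case (elim t)
      then have "(sig (Suc k) t)\<^sup>2 * (1 - \<bar>vinner (dims k) (v t (Suc k)) (u t k)\<bar>) \<le> D" using main by blast
      then have "1 - \<bar>vinner (dims k) (v t (Suc k)) (u t k)\<bar> \<le> D / (sig (Suc k) t)\<^sup>2"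
        using elim by (simp add: le_divide_eq mult.commute)
      then show ?case by simp
    qed
  qed simp
qed


definition yv :: "nat \<Rightarrow> real \<Rightarrow> nat \<Rightarrow> real" where
  "yv m t i = (\<Sum>j<dims 0. P (Wt t) m i j * v t 1 j) / (\<Prod>k\<in>{1..m}. Fr k t)"
definition ny :: "nat \<Rightarrow> real \<Rightarrow> real" where
  "ny m t = (\<Sum>i<dims m. (yv m t i)\<^sup>2)"
definition ay :: "nat \<Rightarrow> real \<Rightarrow> real" where
  "ay m t = vinner (dims m) (u t m) (yv m t)"

lemma yv_Suc: "yv (Suc m) t i = layer_mv dims (Wt t) (Suc m) (yv m t) i / Fr (Suc m) t"
proof -
  have "(\<Sum>j<dims 0. P (Wt t) (Suc m) i j * v t 1 j) = (\<Sum>c<dims m. Wt t (Suc m) i c * (\<Sum>j<dims 0. P (Wt t) m c j * v t 1 j))"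
    by (simp add: sum_distrib_left sum_distrib_right mult.assoc sum.swap[of _ "{..<dims m}"])
  moreover have "layer_mv dims (Wt t) (Suc m) (yv m t) i = (\<Sum>c<dims m. Wt t (Suc m) i c * (\<Sum>j<dims 0. P (Wt t) m c j * v t 1 j)) / (\<Prod>k\<in>{1..m}. Fr k t)"
    unfolding layer_mv_def yv_def by (simp add: sum_divide_distrib[symmetric])
  moreover have "(\<Prod>k\<in>{1..Suc m}. Fr k t) = (\<Prod>k\<in>{1..m}. Fr k t) * Fr (Suc m) t"
    by (simp add: prod.nat_ivl_Suc')
  ultimately show ?thesis unfolding yv_def by simp
qed

lemma yv_1: "t \<ge> 0 \<Longrightarrow> i < dims 1 \<Longrightarrow> yv 1 t i = sig 1 t * u t 1 i / Fr 1 t"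
proof -
  assume t: "t \<ge> 0" and i: "i < dims 1"
  have k1: "1 \<in> {1..L}" using L2 by auto
  have "(\<Sum>j<dims 0. P (Wt t) 1 i j * v t 1 j) = (\<Sum>j<dims 0. Wt t 1 i j * v t 1 j)"
  proof (intro sum.cong refl)
    fix j assume j: "j \<in> {..<dims 0}"
    have "P (Wt t) 1 i j = (\<Sum>c<dims 0. (if c = j then 1 else 0) * Wt t 1 i c)" by (simp add: mult.commute)
    also have "\<dots> = Wt t 1 i j" using j by (intro sum_delta_left) simp
    finally show "P (Wt t) 1 i j * v t 1 j = Wt t 1 i j * v t 1 j" by simp
  qed
  also have "\<dots> = layer_mv dims (Wt t) 1 (v t 1) i" by (simp add: layer_mv_def)
  also have "\<dots> = sig 1 t * u t 1 i" using tsp_facts(3)[OF tsp[OF t k1] i] .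
  finally show ?thesis unfolding yv_def by simp
qed

lemma base_lim:
  shows "((\<lambda>t. ny 1 t - (ay 1 t)\<^sup>2) \<longlongrightarrow> 0) at_top" "((\<lambda>t. (ay 1 t)\<^sup>2) \<longlongrightarrow> 1) at_top"
proof -
  have k1: "1 \<in> {1..L}" using L2 by auto
  have ev: "\<forall>\<^sub>F t in at_top. ny 1 t = (sig 1 t / Fr 1 t)\<^sup>2 \<and> ay 1 t = sig 1 t / Fr 1 t"
    using eventually_ge_at_top[of "0::real"]
  proof eventually_elim
    case (elim t)
    have n: "ny 1 t = (sig 1 t / Fr 1 t)\<^sup>2 * (\<Sum>i<dims 1. (u t 1 i)\<^sup>2)"
      unfolding ny_def sum_distrib_left using yv_1[OF elim]
      by (intro sum.cong refl) (simp add: power_divide power_mult_distrib)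
    have a: "ay 1 t = (sig 1 t / Fr 1 t) * (\<Sum>i<dims 1. (u t 1 i)\<^sup>2)"
      unfolding ay_def vinner_def sum_distrib_left using yv_1[OF elim]
      by (intro sum.cong refl) (simp add: power2_eq_square)
    show ?case using n a tsp_facts(1)[OF tsp[OF elim k1]] by simp
  qed
  have r: "((\<lambda>t. (sig 1 t / Fr 1 t)\<^sup>2) \<longlongrightarrow> 1) at_top"
    using tendsto_power[OF ratio_lim[OF k1], of 2] by simp
  show "((\<lambda>t. (ay 1 t)\<^sup>2) \<longlongrightarrow> 1) at_top"
    by (rule Lim_transform_eventually[OF r]) (use ev in \<open>auto elim: eventually_mono\<close>)
  show "((\<lambda>t. ny 1 t - (ay 1 t)\<^sup>2) \<longlongrightarrow> 0) at_top"
    by (rule Lim_transform_eventually[OF tendsto_const[of 0]]) (use ev in \<open>auto elim: eventually_mono\<close>)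
qed


lemma step_lim:
  assumes m: "1 \<le> m" "Suc m \<le> L"
    and A: "((\<lambda>t. ny m t - (ay m t)\<^sup>2) \<longlongrightarrow> 0) at_top" and B: "((\<lambda>t. (ay m t)\<^sup>2) \<longlongrightarrow> 1) at_top"
  shows "((\<lambda>t. ny (Suc m) t - (ay (Suc m) t)\<^sup>2) \<longlongrightarrow> 0) at_top" "((\<lambda>t. (ay (Suc m) t)\<^sup>2) \<longlongrightarrow> 1) at_top"
proof -
  have k1: "Suc m \<in> {1..L}" "m \<in> {1..L}" using m by auto
  obtain C where C: "\<forall>t\<ge>0. ee (Suc m) t \<le> C" using ee_bound[OF k1(1)] by blast
  have C0: "C \<ge> 0" using C ee_nonneg[of "Suc m" 0] by auto
  define cp where "cp t = vinner (dims m) (v t (Suc m)) (yv m t)" for t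
  define EE where "EE t = (\<Sum>i<dims (Suc m). (Ev (Wt t) (Suc m) (u t (Suc m)) (v t (Suc m)) (yv m t) i)\<^sup>2)" for t
  have pt: "ay (Suc m) t = sig (Suc m) t * cp t / Fr (Suc m) t
      \<and> ny (Suc m) t - (ay (Suc m) t)\<^sup>2 = EE t / (Fr (Suc m) t)\<^sup>2
      \<and> 0 \<le> EE t \<and> EE t \<le> C * ny m t" if t: "t \<ge> 0" for t
  proof -
    note T = tsp[OF t k1(1)]
    let ?q = "yv m t" and ?F = "Fr (Suc m) t" and ?s = "sig (Suc m) t"
    have mv: "layer_mv dims (Wt t) (Suc m) ?q i = Ev (Wt t) (Suc m) (u t (Suc m)) (v t (Suc m)) ?q i + ?s * u t (Suc m) i * cp t" for i
      by (simp add: Ev_def cp_def)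
    have "(\<Sum>i<dims (Suc m). u t (Suc m) i * layer_mv dims (Wt t) (Suc m) ?q i)
       = (\<Sum>i<dims (Suc m). u t (Suc m) i * Ev (Wt t) (Suc m) (u t (Suc m)) (v t (Suc m)) ?q i) + ?s * cp t * (\<Sum>i<dims (Suc m). (u t (Suc m) i)\<^sup>2)"
      unfolding mv by (simp add: algebra_simps sum.distrib sum_distrib_left power2_eq_square)
    also have "\<dots> = ?s * cp t" using tsp_orth[OF T] tsp_facts(1)[OF T] by simp
    finally have um: "(\<Sum>i<dims (Suc m). u t (Suc m) i * layer_mv dims (Wt t) (Suc m) ?q i) = ?s * cp t" .
    have a: "ay (Suc m) t = ?s * cp t / ?F"
      unfolding ay_def vinner_def yv_Suc using um by (simp add: sum_divide_distrib[symmetric])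
    have n: "ny (Suc m) t = (vnorm (dims (Suc m)) (layer_mv dims (Wt t) (Suc m) ?q))\<^sup>2 / ?F\<^sup>2"
      unfolding ny_def yv_Suc vnorm_sq by (simp add: power_divide sum_divide_distrib)
    have d: "(vnorm (dims (Suc m)) (layer_mv dims (Wt t) (Suc m) ?q))\<^sup>2 = ?s\<^sup>2 * (cp t)\<^sup>2 + EE t"
      using tsp_decomp[OF T, of ?q] by (simp add: cp_def EE_def)
    have e1: "ny (Suc m) t - (ay (Suc m) t)\<^sup>2 = EE t / ?F\<^sup>2"
      unfolding a n d by (simp add: power_divide power_mult_distrib diff_divide_distrib[symmetric])
    have e2: "0 \<le> EE t" unfolding EE_def by (simp add: sum_nonneg)
    have cs: "(cp t)\<^sup>2 \<le> (vnorm (dims m) ?q)\<^sup>2"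
    proof -
      have "\<bar>cp t\<bar> \<le> vnorm (dims m) ?q" using vinner_abs_le[of "dims m" "v t (Suc m)" ?q] unit_v[OF t k1(1)]
        unfolding cp_def by simp
      then show ?thesis by (metis abs_le_square_iff abs_of_nonneg vnorm_nonneg)
    qed
    have "EE t \<le> ee (Suc m) t * ((vnorm (dims m) ?q)\<^sup>2 - (cp t)\<^sup>2)"
      using tsp_Ebound[OF T, of ?q] by (simp add: EE_def ee_def cp_def)
    also have "\<dots> \<le> C * ((vnorm (dims m) ?q)\<^sup>2 - (cp t)\<^sup>2)" using C t cs by (intro mult_right_mono) auto
    also have "\<dots> \<le> C * (vnorm (dims m) ?q)\<^sup>2" using C0 by (intro mult_left_mono) auto
    also have "(vnorm (dims m) ?q)\<^sup>2 = ny m t" by (simp add: ny_def vnorm_sq)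
    finally show ?thesis using a e1 e2 by simp
  qed
  have nyl: "((\<lambda>t. ny m t) \<longlongrightarrow> 1) at_top"
    using tendsto_add[OF A B] by simp
  have Fr2: "filterlim (\<lambda>t. (Fr (Suc m) t)\<^sup>2) at_infinity at_top"
    by (rule filterlim_at_top_imp_at_infinity[OF Fr2_inf[OF k1(1)]])
  show "((\<lambda>t. ny (Suc m) t - (ay (Suc m) t)\<^sup>2) \<longlongrightarrow> 0) at_top"
  proof (rule tendsto_sandwich[where f="\<lambda>t. 0" and h="\<lambda>t. C * ny m t / (Fr (Suc m) t)\<^sup>2"])
    show "\<forall>\<^sub>F t in at_top. 0 \<le> ny (Suc m) t - (ay (Suc m) t)\<^sup>2"
      using eventually_ge_at_top[of "0::real"]
    proof eventually_elim
      case (elim t)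
      from pt[OF elim] have h: "ny (Suc m) t - (ay (Suc m) t)\<^sup>2 = EE t / (Fr (Suc m) t)\<^sup>2" "0 \<le> EE t" by blast+
      show ?case unfolding h(1) using h(2) by simp
    qed
    show "\<forall>\<^sub>F t in at_top. ny (Suc m) t - (ay (Suc m) t)\<^sup>2 \<le> C * ny m t / (Fr (Suc m) t)\<^sup>2"
      using eventually_ge_at_top[of "0::real"]
    proof eventually_elim
      case (elim t)
      from pt[OF elim] have h: "ny (Suc m) t - (ay (Suc m) t)\<^sup>2 = EE t / (Fr (Suc m) t)\<^sup>2" "EE t \<le> C * ny m t" by blast+
      show ?case unfolding h(1) using h(2) by (intro divide_right_mono) auto
    qed
    show "((\<lambda>t. C * ny m t / (Fr (Suc m) t)\<^sup>2) \<longlongrightarrow> 0) at_top"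
      by (rule tendsto_divide_0[OF tendsto_mult[OF tendsto_const nyl] Fr2])
  qed simp
  define X where "X t = ay m t * vinner (dims m) (v t (Suc m)) (u t m)" for t
  define Y where "Y t = vinner (dims m) (v t (Suc m)) (\<lambda>i. yv m t i - ay m t * u t m i)" for t
  have cpXY: "cp t = X t + Y t" for t
    unfolding cp_def X_def Y_def vinner_def by (simp add: algebra_simps sum_subtractf sum_distrib_left)
  have Y2: "(Y t)\<^sup>2 \<le> ny m t - (ay m t)\<^sup>2" if t: "t \<ge> 0" for t
  proof -
    have "\<bar>Y t\<bar> \<le> vnorm (dims m) (v t (Suc m)) * vnorm (dims m) (\<lambda>i. yv m t i - ay m t * u t m i)"
      unfolding Y_def by (rule vinner_abs_le)
    then have "\<bar>Y t\<bar> \<le> vnorm (dims m) (\<lambda>i. yv m t i - ay m t * u t m i)" using unit_v[OF t k1(1)] by simp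
    then have "(Y t)\<^sup>2 \<le> (vnorm (dims m) (\<lambda>i. yv m t i - ay m t * u t m i))\<^sup>2"
      by (metis abs_le_square_iff abs_of_nonneg vnorm_nonneg)
    also have "\<dots> = ny m t - 2 * ay m t * (\<Sum>i<dims m. u t m i * yv m t i) + (ay m t)\<^sup>2 * (\<Sum>i<dims m. (u t m i)\<^sup>2)"
      unfolding vnorm_sq ny_def
      by (simp add: power2_eq_square algebra_simps sum_subtractf sum.distrib sum_distrib_left)
    also have "\<dots> = ny m t - 2 * ay m t * ay m t + (ay m t)\<^sup>2 * (\<Sum>i<dims m. (u t m i)\<^sup>2)"
      by (simp add: ay_def vinner_def)
    also have "\<dots> = ny m t - (ay m t)\<^sup>2" using tsp_facts(1)[OF tsp[OF t k1(2)]] by (simp add: power2_eq_square)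
    finally show ?thesis .
  qed
  have Y2l: "((\<lambda>t. (Y t)\<^sup>2) \<longlongrightarrow> 0) at_top"
    by (rule tendsto_sandwich[where f="\<lambda>t. 0" and h="\<lambda>t. ny m t - (ay m t)\<^sup>2", OF _ _ tendsto_const A])
       (use Y2 in \<open>auto simp: eventually_at_top_linorder intro!: exI[of _ 0]\<close>)
  have Yl: "((\<lambda>t. \<bar>Y t\<bar>) \<longlongrightarrow> 0) at_top"
    using tendsto_real_sqrt[OF Y2l] by simp
  have bl: "((\<lambda>t. \<bar>vinner (dims m) (v t (Suc m)) (u t m)\<bar>) \<longlongrightarrow> 1) at_top"
    using layer_align[OF m] by simp
  have al: "((\<lambda>t. \<bar>ay m t\<bar>) \<longlongrightarrow> 1) at_top"
    using tendsto_real_sqrt[OF B] by simp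
  have Xl: "((\<lambda>t. \<bar>X t\<bar>) \<longlongrightarrow> 1) at_top"
    unfolding X_def abs_mult using tendsto_mult[OF al bl] by simp
  have XYl: "((\<lambda>t. X t * Y t) \<longlongrightarrow> 0) at_top"
  proof -
    have "((\<lambda>t. \<bar>X t\<bar> * \<bar>Y t\<bar>) \<longlongrightarrow> 1 * 0) at_top" by (rule tendsto_mult[OF Xl Yl])
    then have "((\<lambda>t. \<bar>X t * Y t\<bar>) \<longlongrightarrow> 0) at_top" by (simp add: abs_mult)
    then show ?thesis by (simp add: tendsto_rabs_zero_iff)
  qed
  have X2l: "((\<lambda>t. (X t)\<^sup>2) \<longlongrightarrow> 1) at_top"
    using tendsto_power[OF Xl, of 2] by simp
  have cpl: "((\<lambda>t. (cp t)\<^sup>2) \<longlongrightarrow> 1) at_top"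
  proof -
    have "((\<lambda>t. (X t)\<^sup>2 + 2 * (X t * Y t) + (Y t)\<^sup>2) \<longlongrightarrow> 1 + 2 * 0 + 0) at_top"
      by (intro tendsto_add tendsto_mult X2l XYl Y2l tendsto_const)
    then show ?thesis unfolding cpXY by (simp add: power2_eq_square algebra_simps)
  qed
  have rl: "((\<lambda>t. (sig (Suc m) t / Fr (Suc m) t)\<^sup>2) \<longlongrightarrow> 1) at_top"
    using tendsto_power[OF ratio_lim[OF k1(1)], of 2] by simp
  have "((\<lambda>t. (sig (Suc m) t / Fr (Suc m) t)\<^sup>2 * (cp t)\<^sup>2) \<longlongrightarrow> 1 * 1) at_top"
    by (rule tendsto_mult[OF rl cpl])
  then have L1: "((\<lambda>t. (sig (Suc m) t / Fr (Suc m) t)\<^sup>2 * (cp t)\<^sup>2) \<longlongrightarrow> 1) at_top" by simp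
  show "((\<lambda>t. (ay (Suc m) t)\<^sup>2) \<longlongrightarrow> 1) at_top"
  proof (rule Lim_transform_eventually[OF L1])
    show "\<forall>\<^sub>F t in at_top. (sig (Suc m) t / Fr (Suc m) t)\<^sup>2 * (cp t)\<^sup>2 = (ay (Suc m) t)\<^sup>2"
      using eventually_ge_at_top[of "0::real"]
    proof eventually_elim
      case (elim t)
      from pt[OF elim] have "ay (Suc m) t = sig (Suc m) t * cp t / Fr (Suc m) t" by blast
      then show ?case by (simp add: power_divide power_mult_distrib)
    qed
  qed
qed


lemma ay_lim: "1 \<le> m \<Longrightarrow> m \<le> L \<Longrightarrow> ((\<lambda>t. ny m t - (ay m t)\<^sup>2) \<longlongrightarrow> 0) at_top \<and> ((\<lambda>t. (ay m t)\<^sup>2) \<longlongrightarrow> 1) at_top"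
proof (induction m)
  case 0 then show ?case by simp
next
  case (Suc m)
  show ?case
  proof (cases "m = 0")
    case True then show ?thesis using base_lim by simp
  next
    case False
    then have m: "1 \<le> m" "Suc m \<le> L" using Suc.prems by auto
    then have IH: "((\<lambda>t. ny m t - (ay m t)\<^sup>2) \<longlongrightarrow> 0) at_top" "((\<lambda>t. (ay m t)\<^sup>2) \<longlongrightarrow> 1) at_top"
      using Suc.IH by auto
    show ?thesis using step_lim[OF m IH] by simp
  qed
qed

lemma wprod_lim: "((\<lambda>t. \<bar>vinner (dims 0)
              (\<lambda>j. wprod dims L (Wt t) j / (\<Prod>k\<in>{1..L}. frob dims (Wt t) k)) (v t 1)\<bar>) \<longlongrightarrow> 1) at_top"
proof -
  have kL: "L \<in> {1..L}" using L2 by auto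
  have eq: "vinner (dims 0) (\<lambda>j. wprod dims L (Wt t) j / (\<Prod>k\<in>{1..L}. frob dims (Wt t) k)) (v t 1) = yv L t 0" for t
    unfolding vinner_def yv_def wprod_def frob_F2 Fr_def[symmetric] by (simp add: sum_divide_distrib)
  have B: "((\<lambda>t. (ay L t)\<^sup>2) \<longlongrightarrow> 1) at_top" using ay_lim[of L] L2 by simp
  have ev: "\<forall>\<^sub>F t in at_top. (ay L t)\<^sup>2 = (yv L t 0)\<^sup>2"
    using eventually_ge_at_top[of "0::real"]
  proof eventually_elim
    case (elim t)
    have u0: "(u t L 0)\<^sup>2 = 1" using tsp_facts(1)[OF tsp[OF elim kL]] dL by simp
    have "ay L t = u t L 0 * yv L t 0" using dL by (simp add: ay_def vinner_def)
    then show ?case using u0 by (simp add: power_mult_distrib)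
  qed
  have "((\<lambda>t. (yv L t 0)\<^sup>2) \<longlongrightarrow> 1) at_top" by (rule Lim_transform_eventually[OF B ev])
  from tendsto_real_sqrt[OF this] have "((\<lambda>t. \<bar>yv L t 0\<bar>) \<longlongrightarrow> 1) at_top" by simp
  then show ?thesis unfolding eq .
qed

theorem main:
  shows "((\<lambda>t. risk loss n x y dims L (Wt t)) \<longlongrightarrow> 0) at_top
    \<and> (\<forall>k\<in>{1..L}. filterlim (\<lambda>t. frob dims (Wt t) k) at_top at_top)
    \<and> (\<forall>k\<in>{1..L}. ((\<lambda>t. align_err dims (Wt t) k (u t k) (v t k)) \<longlongrightarrow> 0) at_top)
    \<and> (\<forall>k\<in>{1..<L}. ((\<lambda>t. \<bar>vinner (dims k) (v t (k + 1)) (u t k)\<bar>) \<longlongrightarrow> 1) at_top)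
    \<and> ((\<lambda>t. \<bar>vinner (dims 0)
              (\<lambda>j. wprod dims L (Wt t) j / (\<Prod>k\<in>{1..L}. frob dims (Wt t) k)) (v t 1)\<bar>)
         \<longlongrightarrow> 1) at_top
    \<and> filterlim (\<lambda>t. vnorm (dims 0) (wprod dims L (Wt t))) at_top at_top"
proof (intro conjI ballI)
  show "((\<lambda>t. risk loss n x y dims L (Wt t)) \<longlongrightarrow> 0) at_top" by (rule R_lim)
next
  fix k assume k: "k \<in> {1..L}"
  show "filterlim (\<lambda>t. frob dims (Wt t) k) at_top at_top"
    using Fr_inf[OF k] by (simp add: frob_F2 Fr_def[abs_def])
next
  fix k assume k: "k \<in> {1..L}"
  show "((\<lambda>t. align_err dims (Wt t) k (u t k) (v t k)) \<longlongrightarrow> 0) at_top" by (rule align_lim[OF k])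
next
  fix k assume k: "k \<in> {1..<L}"
  then show "((\<lambda>t. \<bar>vinner (dims k) (v t (k + 1)) (u t k)\<bar>) \<longlongrightarrow> 1) at_top"
    using layer_align[of k] by simp
next
  show "((\<lambda>t. \<bar>vinner (dims 0)
              (\<lambda>j. wprod dims L (Wt t) j / (\<Prod>k\<in>{1..L}. frob dims (Wt t) k)) (v t 1)\<bar>) \<longlongrightarrow> 1) at_top"
    by (rule wprod_lim)
next
  show "filterlim (\<lambda>t. vnorm (dims 0) (wprod dims L (Wt t))) at_top at_top"
    using pn_inf by (simp add: pn_def vnorm_def wprod_def)
qed

end


theorem mainTheorem1:
  fixes n L :: nat and dims :: "nat \<Rightarrow> nat"
    and x :: "nat \<Rightarrow> nat \<Rightarrow> real" and y :: "nat \<Rightarrow> real"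
    and loss :: "real \<Rightarrow> real"
    and Wt :: "real \<Rightarrow> net"
    and u v :: "real \<Rightarrow> nat \<Rightarrow> nat \<Rightarrow> real"
  assumes L2: "L \<ge> 2"
    and dimL: "dims L = 1"
    and labels: "\<forall>i<n. y i = -1 \<or> y i = 1"
    and xbound: "\<forall>i<n. vnorm (dims 0) (x i) \<le> 1"
    and separable: "\<exists>w. vnorm (dims 0) w = 1 \<and> (\<forall>i<n. vinner (dims 0) w (zvec x y i) > 0)"
    and loss_diff: "\<forall>s. loss differentiable (at s)"
    and loss_C1: "continuous_on UNIV (deriv loss)"
    and loss_dec: "\<forall>s. deriv loss s < 0"
    and loss_bot: "filterlim loss at_top at_bot"
    and loss_top: "(loss \<longlongrightarrow> 0) at_top"
    and flow: "\<forall>t\<ge>0. \<forall>k\<in>{1..L}. \<forall>i<dims k. \<forall>j<dims (k - 1).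
                 ((\<lambda>s. Wt s k i j) has_real_derivative
                    - grad_entry (risk loss n x y dims L) (Wt t) k i j) (at t within {0..})"
    and flow_C1: "\<forall>k\<in>{1..L}. \<forall>i<dims k. \<forall>j<dims (k - 1).
                 continuous_on {0..} (\<lambda>t. grad_entry (risk loss n x y dims L) (Wt t) k i j)"
    and init_grad: "\<exists>k\<in>{1..L}. \<exists>i<dims k. \<exists>j<dims (k - 1).
                 grad_entry (risk loss n x y dims L) (Wt 0) k i j \<noteq> 0"
    and init_risk: "risk loss n x y dims L (Wt 0) \<le> loss 0"
    and singvecs: "\<forall>t\<ge>0. \<forall>k\<in>{1..L}. top_sing_pair dims (Wt t) k (u t k) (v t k)"
  shows "((\<lambda>t. risk loss n x y dims L (Wt t)) \<longlongrightarrow> 0) at_top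
    \<and> (\<forall>k\<in>{1..L}. filterlim (\<lambda>t. frob dims (Wt t) k) at_top at_top)
    \<and> (\<forall>k\<in>{1..L}. ((\<lambda>t. align_err dims (Wt t) k (u t k) (v t k)) \<longlongrightarrow> 0) at_top)
    \<and> (\<forall>k\<in>{1..<L}. ((\<lambda>t. \<bar>vinner (dims k) (v t (k + 1)) (u t k)\<bar>) \<longlongrightarrow> 1) at_top)
    \<and> ((\<lambda>t. \<bar>vinner (dims 0)
              (\<lambda>j. wprod dims L (Wt t) j / (\<Prod>k\<in>{1..L}. frob dims (Wt t) k)) (v t 1)\<bar>)
         \<longlongrightarrow> 1) at_top
    \<and> filterlim (\<lambda>t. vnorm (dims 0) (wprod dims L (Wt t))) at_top at_top"
proof -
  interpret full2 n L dims x y loss Wt u v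
  proof (unfold_locales)
  qed (use L2 dimL labels xbound separable loss_diff loss_C1 loss_dec loss_bot loss_top flow init_grad init_risk singvecs in auto)
  show ?thesis by (rule main)
qed

end
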